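(* If $f\in\mathbb{Z}[x_1,x_2,\dots]$ is atom-positive, then $\pi_if$ is atom-positive for every positive integer $i$.
   Context: Let $P=\mathbb{Z}[x_1,x_2,\dots]$; $s_i$ acts on $P$ by swapping $x_i,x_{i+1}$; $\partial_if=\frac{f-s_if}{x_i-x_{i+1}}$, $\pi_if=\partial_i(x_if)$, $\theta_if=x_{i+1}\partial_if$; for a reduced decomposition $w=s_{i_1}\cdots s_{i_l}$ of a permutation, $\theta_w=\theta_{i_1}\cdots\theta_{i_l}$ (well defined), $\theta_{\mathrm{id}}=\mathrm{id}$. For a weak composition $\gamma=(\gamma_1,\dots,\gamma_n)$, $x^\gamma=x_1^{\gamma_1}\cdots x_n^{\gamma_n}$; let $\lambda$ be $\gamma$ sorted into weakly decreasing order and $w$ the minimal-length permutation with $w\cdot\lambda=\gamma$ ($s_i$ swaps entries $i,i+1$). The Demazure atom is $\mathcal{A}_\gamma=\theta_wx^\lambda$. A polynomial is atom-positive if it is a linear combination of Demazure atoms $\mathcal{A}_\gamma$ with nonnegative integer coefficients. *)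

theory Defs
  imports "HOL-Library.Poly_Mapping" "HOL-Combinatorics.Permutations"
begin

text \<open>Polynomials in Z[x_1,x_2,...]: finitely supported maps from monomials
(finitely supported exponent vectors, variable x_k has index k) to integer coefficients.
Index 0 is never used by Demazure atoms; atom-positive polynomials lie in Z[x_1,x_2,...].\<close>

type_synonym zpoly = "(nat \<Rightarrow>\<^sub>0 nat) \<Rightarrow>\<^sub>0 int"

definition X :: "nat \<Rightarrow> zpoly" where
  "X k = Poly_Mapping.single (Poly_Mapping.single k 1) 1"

definition sidx :: "nat \<Rightarrow> nat \<Rightarrow> nat" where
  "sidx i k = (if k = i then Suc i else if k = Suc i then i else k)"

definition sact :: "nat \<Rightarrow> zpoly \<Rightarrow> zpoly" where
  "sact i (f::zpoly) = Abs_poly_mapping (\<lambda>m::nat \<Rightarrow>\<^sub>0 nat. Poly_Mapping.lookup f (Abs_poly_mapping (\<lambda>k. Poly_Mapping.lookup m (sidx i k))))"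

definition ddiff :: "nat \<Rightarrow> zpoly \<Rightarrow> zpoly" where
  "ddiff i f = (THE g. (X i - X (Suc i)) * g = f - sact i f)"

definition piop :: "nat \<Rightarrow> zpoly \<Rightarrow> zpoly" where
  "piop i f = ddiff i (X i * f)"

definition thetaop :: "nat \<Rightarrow> zpoly \<Rightarrow> zpoly" where
  "thetaop i f = X (Suc i) * ddiff i f"

definition word_perm :: "nat list \<Rightarrow> nat \<Rightarrow> nat" where
  "word_perm ws = foldr (\<lambda>i w. sidx i \<circ> w) ws id"

definition perm_length :: "(nat \<Rightarrow> nat) \<Rightarrow> nat" where
  "perm_length w = (LEAST l. \<exists>ws. length ws = l \<and> (\<forall>i\<in>set ws. 1 \<le> i) \<and> word_perm ws = w)"

definition reduced_word :: "nat list \<Rightarrow> (nat \<Rightarrow> nat) \<Rightarrow> bool" where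
  "reduced_word ws w \<longleftrightarrow> (\<forall>i\<in>set ws. 1 \<le> i) \<and> word_perm ws = w \<and> length ws = perm_length w"

definition theta_word :: "nat list \<Rightarrow> zpoly \<Rightarrow> zpoly" where
  "theta_word ws f = foldr thetaop ws f"

definition theta_perm :: "(nat \<Rightarrow> nat) \<Rightarrow> zpoly \<Rightarrow> zpoly" where
  "theta_perm w = theta_word (SOME ws. reduced_word ws w)"

text \<open>Weak compositions gamma = (gamma_1,...,gamma_n) as lists (entry j is list index j-1).
Left action of a permutation w of {1..n}: (w\<cdot>gamma)_j = gamma_{w^{-1}(j)}, so s_i swaps entries i,i+1.\<close>
definition comp_act :: "(nat \<Rightarrow> nat) \<Rightarrow> nat list \<Rightarrow> nat list" where
  "comp_act w \<gamma> = map (\<lambda>j. \<gamma> ! (inv w (Suc j) - 1)) [0..<length \<gamma>]"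

definition xmon :: "nat list \<Rightarrow> zpoly" where
  "xmon \<gamma> = (\<Prod>j<length \<gamma>. X (Suc j) ^ (\<gamma> ! j))"

definition sort_dec :: "nat list \<Rightarrow> nat list" where
  "sort_dec \<gamma> = rev (sort \<gamma>)"

definition min_perm :: "nat list \<Rightarrow> nat \<Rightarrow> nat" where
  "min_perm \<gamma> = (ARG_MIN perm_length w. w permutes {1..length \<gamma>} \<and> comp_act w (sort_dec \<gamma>) = \<gamma>)"

definition atom :: "nat list \<Rightarrow> zpoly" where
  "atom \<gamma> = theta_perm (min_perm \<gamma>) (xmon (sort_dec \<gamma>))"

definition atom_positive :: "zpoly \<Rightarrow> bool" where
  "atom_positive f \<longleftrightarrow> (\<exists>S c. finite S \<and> f = (\<Sum>\<gamma>\<in>S. of_nat (c \<gamma>) * atom \<gamma>))"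

end

theory Submission
  imports Defs
begin


lemma sidx_sidx[simp]: "sidx i (sidx i k) = k"
  by (auto simp: sidx_def)

lemma inj_sidx: "inj (sidx i)"
  by (metis injI sidx_sidx)

definition ren :: "nat \<Rightarrow> (nat \<Rightarrow>\<^sub>0 nat) \<Rightarrow> (nat \<Rightarrow>\<^sub>0 nat)" where
  "ren i m = Abs_poly_mapping (\<lambda>k. Poly_Mapping.lookup m (sidx i k))"

lemma lookup_ren[simp]: "Poly_Mapping.lookup (ren i m) k = Poly_Mapping.lookup m (sidx i k)"
proof -
  have "{k. Poly_Mapping.lookup m (sidx i k) \<noteq> 0} = sidx i -` Poly_Mapping.keys m" by (auto simp: in_keys_iff)
  hence "finite {k. Poly_Mapping.lookup m (sidx i k) \<noteq> 0}"
    using finite_vimageI[OF finite_keys inj_sidx] by simp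
  thus ?thesis unfolding ren_def by simp
qed

lemma ren_ren[simp]: "ren i (ren i m) = m"
  by (simp add: poly_mapping_eq_iff fun_eq_iff)

lemma inj_ren: "inj (ren i)"
  by (metis injI ren_ren)

lemma ren_add: "ren i (m + m') = ren i m + ren i m'"
  by (simp add: poly_mapping_eq_iff fun_eq_iff lookup_add)

lemma ren_zero[simp]: "ren i 0 = 0"
  by (simp add: poly_mapping_eq_iff fun_eq_iff)

lemma lookup_sact: "Poly_Mapping.lookup (sact i f) m = Poly_Mapping.lookup f (ren i m)"
proof -
  have "{m. Poly_Mapping.lookup f (ren i m) \<noteq> 0} = ren i -` Poly_Mapping.keys f" by (auto simp: in_keys_iff)
  hence "finite {m. Poly_Mapping.lookup f (ren i m) \<noteq> 0}"
    using finite_vimageI[OF finite_keys inj_ren] by simp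
  moreover have "(\<lambda>m. Poly_Mapping.lookup f (Abs_poly_mapping (\<lambda>k. Poly_Mapping.lookup m (sidx i k)))) = (\<lambda>m. Poly_Mapping.lookup f (ren i m))"
    by (simp add: ren_def)
  ultimately show ?thesis unfolding sact_def by simp
qed

lemma sact_add[simp]: "sact i (f + g) = sact i f + sact i g"
  by (rule poly_mapping_eqI) (simp add: lookup_add lookup_sact)

lemma sact_zero[simp]: "sact i 0 = 0"
  by (simp add: poly_mapping_eq_iff fun_eq_iff lookup_sact)

lemma sact_uminus[simp]: "sact i (- f) = - sact i f"
  by (simp add: poly_mapping_eq_iff fun_eq_iff lookup_sact)

lemma sact_diff[simp]: "sact i (f - g) = sact i f - sact i g"
  by (simp add: poly_mapping_eq_iff fun_eq_iff lookup_sact lookup_minus)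

lemma sact_sum: "sact i (sum F S) = sum (\<lambda>x. sact i (F x)) S"
  by (induct S rule: infinite_finite_induct) auto

lemma sact_sact[simp]: "sact i (sact i f) = f"
  by (simp add: poly_mapping_eq_iff fun_eq_iff lookup_sact)

lemma sact_single: "sact i (Poly_Mapping.single m c) = Poly_Mapping.single (ren i m) c"
proof (rule poly_mapping_eqI)
  fix m'
  have "(m = ren i m') = (ren i m = m')" by (metis ren_ren)
  thus "Poly_Mapping.lookup (sact i (Poly_Mapping.single m c)) m' = Poly_Mapping.lookup (Poly_Mapping.single (ren i m) c) m'"
    unfolding lookup_sact lookup_single by simp
qed

lemma poly_expand: "(f::zpoly) = (\<Sum>m\<in>Poly_Mapping.keys f. Poly_Mapping.single m (Poly_Mapping.lookup f m))"
proof (rule poly_mapping_eqI)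
  fix k
  have "(\<Sum>m\<in>Poly_Mapping.keys f. Poly_Mapping.lookup (Poly_Mapping.single m (Poly_Mapping.lookup f m)) k)
      = (\<Sum>m\<in>Poly_Mapping.keys f. if m = k then Poly_Mapping.lookup f m else 0)"
    by (rule sum.cong) (auto simp: lookup_single when_def)
  also have "\<dots> = Poly_Mapping.lookup f k"
    by (simp add: sum.delta in_keys_iff)
  finally show "Poly_Mapping.lookup f k = Poly_Mapping.lookup (\<Sum>m\<in>Poly_Mapping.keys f. Poly_Mapping.single m (Poly_Mapping.lookup f m)) k"
    by (simp add: lookup_sum)
qed

lemma sact_mult_single: "sact i (Poly_Mapping.single m a * Poly_Mapping.single m' b) =
   sact i (Poly_Mapping.single m a) * sact i (Poly_Mapping.single m' b)"
  by (simp add: mult_single sact_single ren_add)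

lemma sact_mult[simp]: "sact i (f * g) = sact i f * sact i (g::zpoly)"
proof -
  have "sact i (f * g) = sact i ((\<Sum>m\<in>Poly_Mapping.keys f. Poly_Mapping.single m (Poly_Mapping.lookup f m)) * (\<Sum>m\<in>Poly_Mapping.keys g. Poly_Mapping.single m (Poly_Mapping.lookup g m)))"
    using poly_expand[of f] poly_expand[of g] by simp
  also have "\<dots> = (\<Sum>m\<in>Poly_Mapping.keys f. \<Sum>m'\<in>Poly_Mapping.keys g. sact i (Poly_Mapping.single m (Poly_Mapping.lookup f m)) * sact i (Poly_Mapping.single m' (Poly_Mapping.lookup g m')))"
    by (simp add: sum_product sact_sum sact_mult_single)
  also have "\<dots> = sact i (\<Sum>m\<in>Poly_Mapping.keys f. Poly_Mapping.single m (Poly_Mapping.lookup f m)) * sact i (\<Sum>m\<in>Poly_Mapping.keys g. Poly_Mapping.single m (Poly_Mapping.lookup g m))"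
    by (simp add: sum_product sact_sum)
  finally show ?thesis using poly_expand[of f] poly_expand[of g] by simp
qed

lemma sact_one[simp]: "sact i 1 = 1"
  by (metis sact_single single_one ren_zero)

lemma sact_power[simp]: "sact i (f ^ n) = sact i f ^ n"
  by (induct n) auto

lemma sact_prod: "sact i (prod F S) = prod (\<lambda>x. sact i (F x)) S"
  by (induct S rule: infinite_finite_induct) auto

lemma sact_X[simp]: "sact i (X k) = X (sidx i k)"
proof -
  have "ren i (Poly_Mapping.single k 1) = Poly_Mapping.single (sidx i k) 1"
  proof (rule poly_mapping_eqI)
    fix j
    have "(k = sidx i j) = (sidx i k = j)" by (metis sidx_sidx)
    thus "Poly_Mapping.lookup (ren i (Poly_Mapping.single k 1)) j = Poly_Mapping.lookup (Poly_Mapping.single (sidx i k) 1) j"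
      by (simp add: lookup_single)
  qed
  thus ?thesis by (simp add: X_def sact_single)
qed

lemma sact_of_int[simp]: "sact i (of_int c) = of_int c"
  by (metis sact_single single_of_int ren_zero)

lemma sact_of_nat[simp]: "sact i (of_nat c) = of_nat c"
  by (metis sact_single single_of_nat ren_zero)

lemma sidx_comm: "Suc a < b \<or> Suc b < a \<Longrightarrow> sidx a (sidx b k) = sidx b (sidx a k)"
  by (auto simp: sidx_def)

lemma sidx_braid: "sidx a (sidx (Suc a) (sidx a k)) = sidx (Suc a) (sidx a (sidx (Suc a) k))"
  by (auto simp: sidx_def)

lemma sact_comm: "Suc a < b \<or> Suc b < a \<Longrightarrow> sact a (sact b f) = sact b (sact a f)"
proof (rule poly_mapping_eqI)
  fix m assume h: "Suc a < b \<or> Suc b < a"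
  have "ren b (ren a m) = ren a (ren b m)"
    by (rule poly_mapping_eqI) (simp add: sidx_comm[OF h])
  thus "Poly_Mapping.lookup (sact a (sact b f)) m = Poly_Mapping.lookup (sact b (sact a f)) m"
    by (simp add: lookup_sact)
qed

lemma sact_braid: "sact a (sact (Suc a) (sact a f)) = sact (Suc a) (sact a (sact (Suc a) f))"
proof (rule poly_mapping_eqI)
  fix m
  have "ren a (ren (Suc a) (ren a m)) = ren (Suc a) (ren a (ren (Suc a) m))"
    by (rule poly_mapping_eqI) (simp add: sidx_braid)
  thus "Poly_Mapping.lookup (sact a (sact (Suc a) (sact a f))) m = Poly_Mapping.lookup (sact (Suc a) (sact a (sact (Suc a) f))) m"
    by (simp add: lookup_sact)
qed


definition Dl :: "nat \<Rightarrow> zpoly" where "Dl i = X i - X (Suc i)"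

lemma X_inj: "X i = X j \<Longrightarrow> i = j"
  unfolding X_def by (metis inj_single injD one_neq_zero lookup_single_eq lookup_single_not_eq)

lemma X_ne: "i \<noteq> j \<Longrightarrow> X i \<noteq> X j"
  using X_inj by blast

lemma Dl_ne0: "Dl i \<noteq> 0"
  unfolding Dl_def using X_ne[of i "Suc i"] by simp

lemma sidx_simps[simp]: "sidx i i = Suc i" "sidx i (Suc i) = i"
  "k \<noteq> i \<Longrightarrow> k \<noteq> Suc i \<Longrightarrow> sidx i k = k"
  by (auto simp: sidx_def)

lemma sact_Dl[simp]: "sact i (Dl i) = - Dl i"
  by (simp add: Dl_def)

lemma X_pow: "X k ^ a = Poly_Mapping.single (Poly_Mapping.single k a) 1"
proof (induct a)
  case 0 then show ?case by simp
next
  case (Suc a)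
  have "X k ^ Suc a = Poly_Mapping.single (Poly_Mapping.single k a) 1 * X k"
    by (simp add: Suc mult.commute)
  also have "\<dots> = Poly_Mapping.single (Poly_Mapping.single k (Suc a)) 1"
    by (simp add: X_def mult_single single_add[symmetric])
  finally show ?case .
qed

lemma pow_diff_div: "\<exists>q. (u - v) * q = u ^ a * v ^ b - v ^ a * (u ^ b :: 'a::comm_ring_1)"
proof (cases "b \<le> a")
  case True
  then obtain k where k: "a = b + k" using le_Suc_ex by blast
  obtain S where S: "u ^ k - v ^ k = (u - v) * S" using power_diff_sumr2 by blast
  have "u ^ a * v ^ b - v ^ a * u ^ b = (u * v) ^ b * (u ^ k - v ^ k)"
    by (simp add: k power_add power_mult_distrib algebra_simps)
  also have "\<dots> = (u - v) * ((u * v) ^ b * S)" by (simp add: S algebra_simps)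
  finally show ?thesis by metis
next
  case False
  then obtain k where k: "b = a + k" by (metis le_Suc_ex nle_le)
  obtain S where S: "u ^ k - v ^ k = (u - v) * S" using power_diff_sumr2 by blast
  have "u ^ a * v ^ b - v ^ a * u ^ b = - ((u * v) ^ a * (u ^ k - v ^ k))"
    by (simp add: k power_add power_mult_distrib algebra_simps)
  also have "\<dots> = (u - v) * (- ((u * v) ^ a * S))" by (simp add: S algebra_simps)
  finally show ?thesis by metis
qed

lemma ddiff_exists_mon: "\<exists>g. Dl i * g = Poly_Mapping.single m 1 - sact i (Poly_Mapping.single m 1)"
proof -
  define a where "a = Poly_Mapping.lookup m i"
  define b where "b = Poly_Mapping.lookup m (Suc i)"
  define m0 where "m0 = Poly_Mapping.update i 0 (Poly_Mapping.update (Suc i) 0 m)"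
  have m: "m = m0 + Poly_Mapping.single i a + Poly_Mapping.single (Suc i) b"
    by (rule poly_mapping_eqI) (auto simp: m0_def a_def b_def lookup_add lookup_update lookup_single when_def)
  have r0: "ren i m0 = m0"
    by (rule poly_mapping_eqI) (auto simp: m0_def lookup_update sidx_def)
  have rm: "ren i m = m0 + Poly_Mapping.single i b + Poly_Mapping.single (Suc i) a"
    by (rule poly_mapping_eqI) (auto simp: m0_def a_def b_def lookup_add lookup_update lookup_single when_def sidx_def)
  have e1: "Poly_Mapping.single m 1 = Poly_Mapping.single m0 1 * (X i ^ a * X (Suc i) ^ b)"
    by (subst m) (simp add: X_pow mult_single add.assoc)
  have e2: "sact i (Poly_Mapping.single m 1) = Poly_Mapping.single m0 1 * (X (Suc i) ^ a * X i ^ b)"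
    by (simp add: sact_single rm X_pow mult_single add_ac)
  obtain q where q: "(X i - X (Suc i)) * q = X i ^ a * X (Suc i) ^ b - X (Suc i) ^ a * X i ^ b"
    using pow_diff_div by blast
  have "Dl i * (Poly_Mapping.single m0 1 * q) = Poly_Mapping.single m0 1 * ((X i - X (Suc i)) * q)"
    by (simp add: Dl_def mult.left_commute)
  also have "\<dots> = Poly_Mapping.single m 1 - sact i (Poly_Mapping.single m 1)"
    unfolding q by (subst e2, subst e1, simp add: right_diff_distrib)
  finally have "Dl i * (Poly_Mapping.single m0 1 * q) = Poly_Mapping.single m 1 - sact i (Poly_Mapping.single m 1)" .
  thus ?thesis by blast
qed

lemma ddiff_exists: "\<exists>g. Dl i * g = f - sact i f"
proof -
  have mon: "\<exists>g. Dl i * g = Poly_Mapping.single m c - sact i (Poly_Mapping.single m c)" for m c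
  proof -
    obtain g where g: "Dl i * g = Poly_Mapping.single m 1 - sact i (Poly_Mapping.single m 1)"
      using ddiff_exists_mon by blast
    have sc: "Poly_Mapping.single m c = Poly_Mapping.single 0 c * Poly_Mapping.single m 1"
      by (simp add: mult_single)
    have "Dl i * (Poly_Mapping.single 0 c * g) = Poly_Mapping.single 0 c * (Dl i * g)"
      by (simp add: mult.left_commute)
    also have "\<dots> = Poly_Mapping.single m c - sact i (Poly_Mapping.single m c)"
      unfolding g sc sact_mult by (simp add: sact_single right_diff_distrib)
    finally have "Dl i * (Poly_Mapping.single 0 c * g) = Poly_Mapping.single m c - sact i (Poly_Mapping.single m c)" .
    thus ?thesis by blast
  qed
  have "\<exists>g. Dl i * g = (\<Sum>m\<in>S. Poly_Mapping.single m (Poly_Mapping.lookup f m)) - sact i (\<Sum>m\<in>S. Poly_Mapping.single m (Poly_Mapping.lookup f m))"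
    if "finite S" for S
    using that
  proof (induct S rule: finite_induct)
    case empty then show ?case by (rule exI[of _ 0]) simp
  next
    case (insert x S)
    then obtain g where g: "Dl i * g = (\<Sum>m\<in>S. Poly_Mapping.single m (Poly_Mapping.lookup f m)) - sact i (\<Sum>m\<in>S. Poly_Mapping.single m (Poly_Mapping.lookup f m))" by blast
    obtain g' where g': "Dl i * g' = Poly_Mapping.single x (Poly_Mapping.lookup f x) - sact i (Poly_Mapping.single x (Poly_Mapping.lookup f x))"
      using mon by blast
    have "Dl i * (g + g') = (\<Sum>m\<in>insert x S. Poly_Mapping.single m (Poly_Mapping.lookup f m)) - sact i (\<Sum>m\<in>insert x S. Poly_Mapping.single m (Poly_Mapping.lookup f m))"
      using insert(1,2) by (simp add: distrib_left g g')
    thus ?case by blast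
  qed
  from this[of "Poly_Mapping.keys f"] show ?thesis using poly_expand[of f, symmetric] by simp
qed

lemma Dl_cancel: "Dl i * g = Dl i * g' \<Longrightarrow> g = g'"
  using Dl_ne0 by simp

lemma ddiff_spec: "Dl i * ddiff i f = f - sact i f"
proof -
  have "\<exists>!g. Dl i * g = f - sact i f"
    using ddiff_exists Dl_cancel by metis
  hence "Dl i * (THE g. Dl i * g = f - sact i f) = f - sact i f" by (rule theI')
  thus ?thesis unfolding ddiff_def Dl_def .
qed

lemma ddiff_eqI: "Dl i * g = f - sact i f \<Longrightarrow> ddiff i f = g"
  using ddiff_spec Dl_cancel by metis

lemma sact_ddiff[simp]: "sact i (ddiff i f) = ddiff i f"
proof -
  have "sact i (Dl i * ddiff i f) = sact i f - f" by (simp add: ddiff_spec)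
  hence "Dl i * sact i (ddiff i f) = f - sact i f" by (simp add: algebra_simps)
  thus ?thesis using ddiff_spec Dl_cancel by metis
qed

lemma ddiff_add: "ddiff i (f + g) = ddiff i f + ddiff i g"
  by (rule ddiff_eqI) (simp add: distrib_left ddiff_spec)

lemma ddiff_diff: "ddiff i (f - g) = ddiff i f - ddiff i g"
  by (rule ddiff_eqI) (simp add: right_diff_distrib ddiff_spec)

lemma ddiff_inv_mult: "sact i h = h \<Longrightarrow> ddiff i (h * f) = h * ddiff i f"
  by (rule ddiff_eqI) (simp add: ddiff_spec algebra_simps)

lemma ddiff_sym: "sact i f = f \<Longrightarrow> ddiff i f = 0"
  by (rule ddiff_eqI) simp

lemma ddiff_zero[simp]: "ddiff i 0 = 0"
  by (rule ddiff_sym) simp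

lemma ddiff_sum: "ddiff i (sum F S) = sum (\<lambda>x. ddiff i (F x)) S"
  by (induct S rule: infinite_finite_induct) (auto simp: ddiff_add)

lemma piop_spec: "Dl i * piop i f = X i * f - X (Suc i) * sact i f"
  by (simp add: piop_def ddiff_spec)

lemma piop_eqI: "Dl i * g = X i * f - X (Suc i) * sact i f \<Longrightarrow> piop i f = g"
  unfolding piop_def by (rule ddiff_eqI) simp

lemma piop_theta: "piop i f = f + thetaop i f"
proof (rule piop_eqI)
  have "Dl i * (f + thetaop i f) = Dl i * f + X (Suc i) * (Dl i * ddiff i f)"
    by (simp add: thetaop_def distrib_left mult.left_commute)
  also have "\<dots> = X i * f - X (Suc i) * sact i f"
    by (simp only: ddiff_spec) (simp add: Dl_def algebra_simps)
  finally show "Dl i * (f + thetaop i f) = X i * f - X (Suc i) * sact i f" .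
qed

lemma theta_piop: "thetaop i f = piop i f - f"
  by (simp add: piop_theta)

lemma sact_piop[simp]: "sact i (piop i f) = piop i f"
  by (simp add: piop_def)

lemma piop_inv: "sact i g = g \<Longrightarrow> piop i g = g"
  by (rule piop_eqI) (simp add: Dl_def algebra_simps)

lemma piop_idem[simp]: "piop i (piop i f) = piop i f"
  by (simp add: piop_inv)

lemma piop_add: "piop i (f + g) = piop i f + piop i g"
  by (simp add: piop_def distrib_left ddiff_add)

lemma piop_diff: "piop i (f - g) = piop i f - piop i g"
  by (simp add: piop_def right_diff_distrib ddiff_diff)

lemma piop_zero[simp]: "piop i 0 = 0"
  by (simp add: piop_def)

lemma piop_sum: "piop i (sum F S) = sum (\<lambda>x. piop i (F x)) S"
  by (induct S rule: infinite_finite_induct) (auto simp: piop_add)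

lemma piop_of_nat_mult: "piop i (of_nat c * f) = of_nat c * piop i f"
proof -
  have 1: "X i * (of_nat c * f) = of_nat c * (X i * f)" by (metis mult.left_commute)
  have 2: "ddiff i (of_nat c * (X i * f)) = of_nat c * ddiff i (X i * f)"
    by (rule ddiff_inv_mult) simp
  show ?thesis unfolding piop_def by (subst 1) (rule 2)
qed

lemma theta_zero[simp]: "thetaop i 0 = 0"
  by (simp add: thetaop_def)

lemma theta_sym: "sact i f = f \<Longrightarrow> thetaop i f = 0"
  by (simp add: thetaop_def ddiff_sym)

lemma theta_theta: "thetaop i (thetaop i f) = - thetaop i f"
  by (simp add: theta_piop piop_diff)

lemma sact_ddiff_comm:
  assumes h: "Suc a < b \<or> Suc b < a"
  shows "sact a (ddiff b f) = ddiff b (sact a f)"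
proof -
  have sD: "sact a (Dl b) = Dl b" using h by (auto simp: Dl_def)
  have "sact a (Dl b * ddiff b f) = sact a f - sact a (sact b f)" by (simp add: ddiff_spec)
  hence "Dl b * sact a (ddiff b f) = sact a f - sact b (sact a f)"
    by (simp add: sD sact_comm[OF h])
  thus ?thesis by (metis ddiff_eqI)
qed

lemma ddiff_comm:
  assumes h: "Suc a < b \<or> Suc b < a"
  shows "ddiff a (ddiff b f) = ddiff b (ddiff a f)"
proof -
  have h': "Suc b < a \<or> Suc a < b" using h by auto
  have "Dl a * Dl b * ddiff a (ddiff b f) = Dl b * (ddiff b f - sact a (ddiff b f))"
    by (simp add: ddiff_spec ac_simps)
  also have "\<dots> = f - sact b f - (sact a f - sact b (sact a f))"
    by (simp add: sact_ddiff_comm[OF h] right_diff_distrib ddiff_spec)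
  finally have 1: "Dl a * Dl b * ddiff a (ddiff b f) = f - sact b f - (sact a f - sact b (sact a f))" .
  have "Dl a * Dl b * ddiff b (ddiff a f) = Dl a * (ddiff a f - sact b (ddiff a f))"
    by (simp add: ddiff_spec ac_simps)
  also have "\<dots> = f - sact a f - (sact b f - sact a (sact b f))"
    by (simp add: sact_ddiff_comm[OF h'] right_diff_distrib ddiff_spec)
  finally have 2: "Dl a * Dl b * ddiff b (ddiff a f) = f - sact a f - (sact b f - sact a (sact b f))" .
  have "Dl a * Dl b * ddiff a (ddiff b f) = Dl a * Dl b * ddiff b (ddiff a f)"
    unfolding 1 2 sact_comm[OF h] by (simp add: algebra_simps)
  thus ?thesis using Dl_ne0 by simp
qed

lemma theta_comm:
  assumes h: "Suc a < b \<or> Suc b < a"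
  shows "thetaop a (thetaop b f) = thetaop b (thetaop a f)"
proof -
  have 1: "sact a (X (Suc b)) = X (Suc b)" using h by (auto simp: sidx_def)
  have 2: "sact b (X (Suc a)) = X (Suc a)" using h by (auto simp: sidx_def)
  show ?thesis unfolding thetaop_def
    by (simp add: ddiff_inv_mult[OF 1] ddiff_inv_mult[OF 2] ddiff_comm[OF h] ac_simps)
qed


lemma alg1:
  fixes x1 x2 x3 D1 D2 D13 g g2 g12 h h1 k :: "'a::comm_ring_1"
  assumes E2: "D2*h = x2*g - x3*g2" and E3: "D1*k = x1*h - x2*h1" and F1: "D13*h1 = x1*g - x3*g12"
    and d: "D1 = x1 - x2" "D2 = x2 - x3" "D13 = x1 - x3"
  shows "D1*D2*D13*k = x1*x2*(D1*g) - x1*x3*(D13*g2) + x2*x3*(D2*g12)"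
proof -
  have "D1*D2*D13*k = D2*D13*(D1*k)" by (simp add: ac_simps)
  also have "\<dots> = x1*D13*(D2*h) - x2*D2*(D13*h1)" unfolding E3 by (simp add: algebra_simps)
  also have "\<dots> = x1*D13*(x2*g - x3*g2) - x2*D2*(x1*g - x3*g12)" unfolding E2 F1 ..
  also have "\<dots> = x1*x2*(D1*g) - x1*x3*(D13*g2) + x2*x3*(D2*g12)" unfolding d by (simp add: algebra_simps)
  finally show ?thesis .
qed

lemma alg2:
  fixes x1 x2 x3 D1 D2 D13 g g1 g21 h h2 k :: "'a::comm_ring_1"
  assumes E2: "D1*h = x1*g - x2*g1" and E3: "D2*k = x2*h - x3*h2" and G1: "D13*h2 = x1*g - x3*g21"
    and d: "D1 = x1 - x2" "D2 = x2 - x3" "D13 = x1 - x3"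
  shows "D1*D2*D13*k = x1^2*(D2*g) - x2^2*(D13*g1) + x3^2*(D1*g21)"
proof -
  have "D1*D2*D13*k = D1*D13*(D2*k)" by (simp add: ac_simps)
  also have "\<dots> = x2*D13*(D1*h) - x3*D1*(D13*h2)" unfolding E3 by (simp add: algebra_simps)
  also have "\<dots> = x2*D13*(x1*g - x2*g1) - x3*D1*(x1*g - x3*g21)" unfolding E2 G1 ..
  also have "\<dots> = x1^2*(D2*g) - x2^2*(D13*g1) + x3^2*(D1*g21)" unfolding d by (simp add: algebra_simps power2_eq_square)
  finally show ?thesis .
qed

lemma sidx_Suc_Suc[simp]: "sidx a (Suc (Suc a)) = Suc (Suc a)" "sidx (Suc a) a = a"
  by (auto simp: sidx_def)

lemma piop_braid: "piop a (piop (Suc a) (piop a f)) = piop (Suc a) (piop a (piop (Suc a) f))"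
proof -
  let ?x1 = "X a" and ?x2 = "X (Suc a)" and ?x3 = "X (Suc (Suc a))"
  let ?s1 = "sact a" and ?s2 = "sact (Suc a)"
  let ?D13 = "X a - X (Suc (Suc a))"
  have d: "Dl a = ?x1 - ?x2" "Dl (Suc a) = ?x2 - ?x3" "?D13 = ?x1 - ?x3" by (simp_all add: Dl_def)
  define g where "g = piop a f"
  define h where "h = piop (Suc a) g"
  define k where "k = piop a h"
  have E1: "Dl a * g = ?x1 * f - ?x2 * ?s1 f" unfolding g_def by (rule piop_spec)
  have E2: "Dl (Suc a) * h = ?x2 * g - ?x3 * ?s2 g" unfolding h_def by (rule piop_spec)
  have E3: "Dl a * k = ?x1 * h - ?x2 * ?s1 h" unfolding k_def by (rule piop_spec)
  have sg: "?s1 g = g" unfolding g_def by simp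
  have F1: "?D13 * ?s1 h = ?x1 * g - ?x3 * ?s1 (?s2 g)"
    using arg_cong[OF E2, of ?s1] by (simp add: Dl_def sg)
  have F2: "?D13 * ?s2 g = ?x1 * ?s2 f - ?x3 * ?s2 (?s1 f)"
    using arg_cong[OF E1, of ?s2] by (simp add: Dl_def)
  have F3: "Dl (Suc a) * ?s1 (?s2 g) = ?x2 * ?s1 (?s2 f) - ?x3 * ?s1 (?s2 (?s1 f))"
    using arg_cong[OF E1, of "\<lambda>u. ?s1 (?s2 u)"] by (simp add: Dl_def)
  have K: "Dl a * Dl (Suc a) * ?D13 * k = ?x1*?x2*(?x1 * f - ?x2 * ?s1 f) - ?x1*?x3*(?x1 * ?s2 f - ?x3 * ?s2 (?s1 f))
      + ?x2*?x3*(?x2 * ?s1 (?s2 f) - ?x3 * ?s1 (?s2 (?s1 f)))"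
    using alg1[OF E2 E3 F1 d] unfolding E1 F2 F3 .
  define g' where "g' = piop (Suc a) f"
  define h' where "h' = piop a g'"
  define k' where "k' = piop (Suc a) h'"
  have E1': "Dl (Suc a) * g' = ?x2 * f - ?x3 * ?s2 f" unfolding g'_def by (rule piop_spec)
  have E2': "Dl a * h' = ?x1 * g' - ?x2 * ?s1 g'" unfolding h'_def by (rule piop_spec)
  have E3': "Dl (Suc a) * k' = ?x2 * h' - ?x3 * ?s2 h'" unfolding k'_def by (rule piop_spec)
  have sg': "?s2 g' = g'" unfolding g'_def by simp
  have G1: "?D13 * ?s2 h' = ?x1 * g' - ?x3 * ?s2 (?s1 g')"
    using arg_cong[OF E2', of ?s2] by (simp add: Dl_def sg')
  have G2: "?D13 * ?s1 g' = ?x1 * ?s1 f - ?x3 * ?s1 (?s2 f)"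
    using arg_cong[OF E1', of ?s1] by (simp add: Dl_def)
  have G3: "Dl a * ?s2 (?s1 g') = ?x1 * ?s2 (?s1 f) - ?x2 * ?s2 (?s1 (?s2 f))"
    using arg_cong[OF E1', of "\<lambda>u. ?s2 (?s1 u)"] by (simp add: Dl_def)
  have K': "Dl a * Dl (Suc a) * ?D13 * k' = ?x1^2*(?x2 * f - ?x3 * ?s2 f) - ?x2^2*(?x1 * ?s1 f - ?x3 * ?s1 (?s2 f))
      + ?x3^2*(?x1 * ?s2 (?s1 f) - ?x2 * ?s2 (?s1 (?s2 f)))"
    using alg2[OF E2' E3' G1 d] unfolding E1' G2 G3 .
  have "Dl a * Dl (Suc a) * ?D13 * k = Dl a * Dl (Suc a) * ?D13 * k'"
    unfolding K K' sact_braid by (simp add: algebra_simps power2_eq_square)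
  moreover have "Dl a * Dl (Suc a) * ?D13 \<noteq> 0"
    using Dl_ne0[of a] Dl_ne0[of "Suc a"] X_ne[of a "Suc (Suc a)"] by simp
  ultimately have "k = k'" by simp
  thus ?thesis unfolding k_def h_def g_def k'_def h'_def g'_def .
qed

lemma theta_braid: "thetaop a (thetaop (Suc a) (thetaop a f)) = thetaop (Suc a) (thetaop a (thetaop (Suc a) f))"
  by (simp add: theta_piop piop_diff piop_add piop_braid algebra_simps)



definition ninv :: "(nat \<Rightarrow> nat) \<Rightarrow> nat" where
  "ninv w = card {(x,y). x < y \<and> w y < w x}"

definition fp :: "(nat \<Rightarrow> nat) \<Rightarrow> bool" where
  "fp w \<longleftrightarrow> (\<exists>N. w permutes {..<N})"

definition desc :: "(nat \<Rightarrow> nat) \<Rightarrow> nat \<Rightarrow> bool" where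
  "desc w a \<longleftrightarrow> inv w (Suc a) < inv w a"

lemma sidx_transpose: "sidx i = Transposition.transpose i (Suc i)"
  by (auto simp: fun_eq_iff sidx_def Transposition.transpose_def)

lemma sidx_permutes: "i \<in> S \<Longrightarrow> Suc i \<in> S \<Longrightarrow> sidx i permutes S"
  using permutes_swap_id[of i S "Suc i"] sidx_transpose by simp

lemma fp_sidx: "fp (sidx i)"
  unfolding fp_def using sidx_permutes[of i "{..<Suc (Suc i)}"] by auto

lemma fp_comp: "fp w \<Longrightarrow> fp v \<Longrightarrow> fp (w \<circ> v)"
proof -
  assume "fp w" "fp v"
  then obtain N M where "w permutes {..<N}" "v permutes {..<M}" unfolding fp_def by blast
  hence "w permutes {..<max N M}" "v permutes {..<max N M}"
    by (auto intro: permutes_subset)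
  thus "fp (w \<circ> v)" unfolding fp_def by (metis permutes_compose)
qed

lemma fp_id: "fp id"
  unfolding fp_def using permutes_id by blast

lemma fp_bij: "fp w \<Longrightarrow> bij w"
  unfolding fp_def using permutes_bij by blast

lemma fp_inv: "fp w \<Longrightarrow> fp (inv w)"
  unfolding fp_def using permutes_inv by blast

lemma inv_sidx: "inv (sidx a) = sidx a"
  by (metis inv_unique_comp o_def sidx_sidx fun_eq_iff id_apply)

lemma bij_sidx: "bij (sidx a)"
  by (metis bij_betw_imageI inj_sidx sidx_sidx surj_def)

lemma inv_sidx_comp: "fp w \<Longrightarrow> inv (sidx a \<circ> w) = inv w \<circ> sidx a"
  by (simp add: o_inv_distrib fp_bij bij_sidx inv_sidx)

lemma inv_comp_sidx: "fp w \<Longrightarrow> inv (w \<circ> sidx a) = sidx a \<circ> inv w"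
  by (simp add: o_inv_distrib fp_bij bij_sidx inv_sidx)

lemma finite_invs: "fp w \<Longrightarrow> finite {(x,y). x < y \<and> w y < w x}"
proof -
  assume "fp w"
  then obtain N where N: "w permutes {..<N}" unfolding fp_def by blast
  have key: "x < N \<and> y < N" if xy: "x < y" "w y < w x" for x y
    proof (rule ccontr)
      assume "\<not> (x < N \<and> y < N)"
      hence "y \<ge> N" using xy by auto
      hence wy: "w y = y" using permutes_not_in[OF N] by auto
      show False
      proof (cases "x < N")
        case True
        hence "w x < N" using permutes_in_image[OF N] by auto
        thus False using xy wy \<open>y \<ge> N\<close> by auto
      next
        case False
        hence "w x = x" using permutes_not_in[OF N] by auto
        thus False using xy wy by auto
      qed
    qed
  have "{(x,y). x < y \<and> w y < w x} \<subseteq> {..<N} \<times> {..<N}" using key by auto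
  thus ?thesis by (rule finite_subset) auto
qed

lemma sidx_less: "sidx a u < sidx a v \<longleftrightarrow>
  (if u = a \<and> v = Suc a then False else if u = Suc a \<and> v = a then True else u < v)"
  by (auto simp: sidx_def)

lemma ninv_left:
  assumes w: "fp w"
  shows "ninv (sidx a \<circ> w) = (if desc w a then ninv w - 1 else Suc (ninv w))"
    and "desc w a \<Longrightarrow> ninv w \<ge> 1"
proof -
  define p where "p = inv w a"
  define q where "q = inv w (Suc a)"
  have b: "bij w" using fp_bij[OF w] .
  have wp: "w p = a" and wq: "w q = Suc a" unfolding p_def q_def using b by (simp_all add: surj_f_inv_f bij_is_surj)
  have pq: "p \<noteq> q" using wp wq by auto
  have wx: "w x = a \<longleftrightarrow> x = p" "w x = Suc a \<longleftrightarrow> x = q" for x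
    using b wp wq by (metis bij_pointE)+
  let ?I = "{(x,y). x < y \<and> w y < w x}"
  have fin: "finite ?I" using finite_invs[OF w] .
  have eq: "{(x,y). x < y \<and> (sidx a \<circ> w) y < (sidx a \<circ> w) x} =
     (if q < p then ?I - {(q,p)} else insert (p,q) ?I)"
    using pq by (auto simp: sidx_less wx split: if_splits)
  have qp_in: "q < p \<Longrightarrow> (q,p) \<in> ?I" using wp wq by auto
  have pq_notin: "\<not> q < p \<Longrightarrow> (p,q) \<notin> ?I" using wp wq by auto
  show "ninv (sidx a \<circ> w) = (if desc w a then ninv w - 1 else Suc (ninv w))"
    unfolding ninv_def desc_def p_def[symmetric] q_def[symmetric] eq
    using fin qp_in pq_notin by (auto simp: card_Diff_singleton)
  show "desc w a \<Longrightarrow> ninv w \<ge> 1"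
    unfolding ninv_def desc_def p_def[symmetric] q_def[symmetric]
    using fin qp_in by (metis (no_types, lifting) One_nat_def Suc_leI card_gt_0_iff empty_iff)
qed

lemma ninv_inv:
  assumes w: "fp w"
  shows "ninv (inv w) = ninv w"
proof -
  have b: "bij w" using fp_bij[OF w] .
  let ?I = "{(x,y). x < y \<and> w y < w x}"
  let ?J = "{(x,y). x < y \<and> inv w y < inv w x}"
  have i1: "inv w (w x) = x" for x by (rule inv_f_f[OF bij_is_inj[OF b]])
  have i2: "w (inv w x) = x" for x by (rule surj_f_inv_f[OF bij_is_surj[OF b]])
  have "bij_betw (\<lambda>(x,y). (w y, w x)) ?I ?J"
  proof (rule bij_betw_byWitness[where f' = "\<lambda>(u,v). (inv w v, inv w u)"])
    show "\<forall>a\<in>?I. (\<lambda>(u,v). (inv w v, inv w u)) ((\<lambda>(x,y). (w y, w x)) a) = a"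
      by (clarsimp simp only: i1 split_def prod.collapse fst_conv snd_conv)
    show "\<forall>a\<in>?J. (\<lambda>(x,y). (w y, w x)) ((\<lambda>(u,v). (inv w v, inv w u)) a) = a"
      by (clarsimp simp only: i2 split_def prod.collapse fst_conv snd_conv)
    show "(\<lambda>(x,y). (w y, w x)) ` ?I \<subseteq> ?J"
    proof
      fix z assume "z \<in> (\<lambda>(x,y). (w y, w x)) ` ?I"
      then obtain x y where "z = (w y, w x)" "x < y" "w y < w x" by auto
      thus "z \<in> ?J" by (simp add: i1)
    qed
    show "(\<lambda>(u,v). (inv w v, inv w u)) ` ?J \<subseteq> ?I"
    proof
      fix z assume "z \<in> (\<lambda>(u,v). (inv w v, inv w u)) ` ?J"
      then obtain x y where "z = (inv w y, inv w x)" "x < y" "inv w y < inv w x" by auto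
      thus "z \<in> ?I" by (simp add: i2)
    qed
  qed
  from bij_betw_same_card[OF this] show ?thesis unfolding ninv_def by simp
qed

lemma ninv_right:
  assumes w: "fp w"
  shows "ninv (w \<circ> sidx q) = (if w (Suc q) < w q then ninv w - 1 else Suc (ninv w))"
proof -
  have b: "bij w" using fp_bij[OF w] .
  have "ninv (w \<circ> sidx q) = ninv (inv (w \<circ> sidx q))"
    using ninv_inv[OF fp_comp[OF w fp_sidx]] by simp
  also have "\<dots> = ninv (sidx q \<circ> inv w)" by (simp add: inv_comp_sidx[OF w])
  also have "\<dots> = (if desc (inv w) q then ninv (inv w) - 1 else Suc (ninv (inv w)))"
    by (rule ninv_left(1)[OF fp_inv[OF w]])
  also have "\<dots> = (if w (Suc q) < w q then ninv w - 1 else Suc (ninv w))"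
    by (simp add: desc_def inv_inv_eq[OF b] ninv_inv[OF w])
  finally show ?thesis .
qed

lemma ninv_right_less:
  assumes w: "fp w" and d: "w (Suc q) < w q"
  shows "ninv (w \<circ> sidx q) < ninv w"
proof -
  have "(q, Suc q) \<in> {(x,y). x < y \<and> w y < w x}" using d by auto
  hence "ninv w \<ge> 1" unfolding ninv_def using finite_invs[OF w]
    by (metis (no_types, lifting) One_nat_def Suc_leI card_gt_0_iff empty_iff)
  thus ?thesis using ninv_right[OF w, of q] d by simp
qed

lemma ninv_id: "ninv id = 0" "ninv (\<lambda>x. x) = 0"
proof -
  have "{(x,y). x < y \<and> id y < (id x::nat)} = {}" by auto
  thus "ninv id = 0" unfolding ninv_def by (simp only: card.empty)
  thus "ninv (\<lambda>x. x) = 0" by (simp add: id_def)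
qed

lemma word_perm_Nil[simp]: "word_perm [] = id"
  by (simp add: word_perm_def)

lemma word_perm_Cons[simp]: "word_perm (a # ws) = sidx a \<circ> word_perm ws"
  by (simp add: word_perm_def)

lemma word_perm_snoc: "word_perm (ws @ [q]) = word_perm ws \<circ> sidx q"
  by (induct ws) auto

lemma fp_word: "fp (word_perm ws)"
  by (induct ws) (simp_all only: word_perm_Nil word_perm_Cons fp_id fp_comp fp_sidx)

lemma word_perm_0: "\<forall>i\<in>set ws. 1 \<le> i \<Longrightarrow> word_perm ws 0 = 0"
  by (induct ws) (auto simp: sidx_def)

lemma ninv_word_le: "ninv (word_perm ws) \<le> length ws"
proof (induct ws)
  case Nil then show ?case by (simp add: ninv_id)
next
  case (Cons a ws)
  have "ninv (word_perm (a # ws)) = ninv (sidx a \<circ> word_perm ws)" by (simp only: word_perm_Cons)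
  also have "\<dots> \<le> Suc (length ws)" using ninv_left(1)[OF fp_word[of ws], of a] Cons by (simp split: if_splits)
  finally show ?case by (simp only: length_Cons)
qed

lemma strict_mono_surj_id:
  fixes f :: "nat \<Rightarrow> nat"
  assumes m: "strict_mono f" and s: "surj f"
  shows "f = id"
proof -
  have "f n = n" for n
  proof (induct n rule: less_induct)
    case (less n)
    obtain m' where m': "n = f m'" using s by (metis surjD)
    have ge: "n \<le> f n" by (simp add: m strict_mono_imp_increasing)
    show ?case
    proof (cases "m' < n")
      case True
      hence "f m' = m'" using less by blast
      hence "n = m'" using m' by simp
      thus ?thesis using True by simp
    next
      case False
      hence "m' = n \<or> n < m'" by auto
      thus ?thesis using m' ge m by (metis not_less strict_mono_less)
    qed
  qed
  thus ?thesis by auto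
qed

lemma no_desc_id:
  assumes w: "fp w" and nd: "\<forall>a. \<not> desc w a"
  shows "w = id"
proof -
  have b: "bij w" using fp_bij[OF w] .
  have bi: "bij (inv w)" using b by (simp add: bij_imp_bij_inv)
  have "inv w a < inv w (Suc a)" for a
  proof -
    have "inv w a \<noteq> inv w (Suc a)" using bi by (metis bij_pointE n_not_Suc_n)
    moreover have "\<not> inv w (Suc a) < inv w a" using nd unfolding desc_def by blast
    ultimately show ?thesis by linarith
  qed
  hence "strict_mono (inv w)" by (simp add: strict_mono_Suc_iff)
  hence "inv w = id" using strict_mono_surj_id bi bij_is_surj by blast
  thus ?thesis using inv_inv_eq[OF b] by (metis inv_id)
qed

lemma word_exists:
  assumes "fp w" "w 0 = 0"
  shows "\<exists>ws. (\<forall>i\<in>set ws. 1 \<le> i) \<and> word_perm ws = w \<and> length ws = ninv w"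
  using assms
proof (induct "ninv w" arbitrary: w rule: less_induct)
  case less
  show ?case
  proof (cases "\<exists>a. desc w a")
    case False
    hence "w = id" using no_desc_id less.prems by blast
    thus ?thesis by (intro exI[of _ "[]"]) (simp add: ninv_id)
  next
    case True
    then obtain a where a: "desc w a" by blast
    have b: "bij w" using fp_bij[OF less.prems(1)] .
    have "inv w 0 = 0" using b less.prems(2) by (metis bij_inv_eq_iff)
    hence a1: "1 \<le> a" using a unfolding desc_def by (cases a) auto
    define w' where "w' = sidx a \<circ> w"
    have n': "ninv w' = ninv w - 1" "ninv w \<ge> 1"
      using ninv_left[OF less.prems(1), of a] a unfolding w'_def by auto
    have fp': "fp w'" unfolding w'_def by (rule fp_comp[OF fp_sidx less.prems(1)])
    have z': "w' 0 = 0" unfolding w'_def using less.prems(2) a1 by (simp add: sidx_def)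
    obtain ws where ws: "\<forall>i\<in>set ws. 1 \<le> i" "word_perm ws = w'" "length ws = ninv w'"
      using less.hyps[of w'] n' fp' z' by auto
    have "word_perm (a # ws) = w" using ws(2) unfolding w'_def by (simp add: comp_assoc[symmetric] fun_eq_iff)
    thus ?thesis using ws a1 n' by (intro exI[of _ "a # ws"]) auto
  qed
qed

lemma perm_length_eq:
  assumes "fp w" "w 0 = 0"
  shows "perm_length w = ninv w"
  unfolding perm_length_def
proof (rule Least_equality)
  show "\<exists>ws. length ws = ninv w \<and> (\<forall>i\<in>set ws. 1 \<le> i) \<and> word_perm ws = w"
    using word_exists[OF assms] by blast
  show "ninv w \<le> l" if "\<exists>ws. length ws = l \<and> (\<forall>i\<in>set ws. 1 \<le> i) \<and> word_perm ws = w" for l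
    using that ninv_word_le by blast
qed

definition red :: "nat list \<Rightarrow> bool" where
  "red ws \<longleftrightarrow> (\<forall>i\<in>set ws. 1 \<le> i) \<and> length ws = ninv (word_perm ws)"

lemma reduced_word_iff: "reduced_word ws w \<longleftrightarrow> red ws \<and> word_perm ws = w"
proof
  assume r: "reduced_word ws w"
  hence "perm_length w = ninv w" using perm_length_eq fp_word word_perm_0 unfolding reduced_word_def by metis
  thus "red ws \<and> word_perm ws = w" using r unfolding reduced_word_def red_def by auto
next
  assume r: "red ws \<and> word_perm ws = w"
  hence "perm_length w = ninv w" using perm_length_eq fp_word word_perm_0 unfolding red_def by metis
  thus "reduced_word ws w" using r unfolding reduced_word_def red_def by auto
qed

lemma red_exists: "fp w \<Longrightarrow> w 0 = 0 \<Longrightarrow> \<exists>ws. red ws \<and> word_perm ws = w"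
  using word_exists unfolding red_def by metis

lemma red_Cons_iff: "red (a # u) \<longleftrightarrow> 1 \<le> a \<and> red u \<and> \<not> desc (word_perm u) a"
  using ninv_left[OF fp_word[of u], of a] ninv_word_le[of u] unfolding red_def
  by (auto split: if_splits)

lemma desc_Cons: "red (a # u) \<Longrightarrow> desc (word_perm (a # u)) a"
proof -
  assume r: "red (a # u)"
  hence nd: "\<not> desc (word_perm u) a" using red_Cons_iff by blast
  have "inv (word_perm (a # u)) = inv (word_perm u) \<circ> sidx a"
    by (simp add: inv_sidx_comp fp_word)
  thus ?thesis using nd
    by (simp add: desc_def) (metis bij_pointE fp_bij fp_inv fp_word lessI linorder_neqE_nat n_not_Suc_n)
qed

lemma sidx_cancel: "w = sidx a \<circ> v \<Longrightarrow> v = sidx a \<circ> w"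
  by (auto simp: fun_eq_iff)

lemma inv_sc: "fp w \<Longrightarrow> inv (sidx c \<circ> w) x = inv w (sidx c x)"
  by (simp add: inv_sidx_comp)

lemma desc_sc: "fp w \<Longrightarrow> desc (sidx c \<circ> w) d \<longleftrightarrow> inv w (sidx c (Suc d)) < inv w (sidx c d)"
  unfolding desc_def by (simp only: inv_sc)

lemma desc_sidx_self: "fp w \<Longrightarrow> desc w a \<Longrightarrow> \<not> desc (sidx a \<circ> w) a"
  by (simp only: desc_sc) (simp add: desc_def)

lemma desc_comm: "fp w \<Longrightarrow> Suc a < b \<or> Suc b < a \<Longrightarrow> desc (sidx b \<circ> w) a = desc w a"
  by (simp only: desc_sc) (auto simp add: desc_def sidx_def)

lemma red_Nil: "red []"
  by (simp add: red_def ninv_id)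

lemma red_letters: "red ws \<Longrightarrow> \<forall>i\<in>set ws. 1 \<le> i"
  by (simp add: red_def)

lemma get_cons:
  assumes r: "red ws" and d: "desc (word_perm ws) b"
  shows "\<exists>z. red (b # z) \<and> word_perm (b # z) = word_perm ws"
proof -
  let ?w = "word_perm ws"
  have fw: "fp ?w" by (rule fp_word)
  have w0: "?w 0 = 0" using word_perm_0 red_letters[OF r] by blast
  have "inv ?w 0 = 0" using fp_bij[OF fw] w0 by (metis bij_inv_eq_iff)
  hence b1: "1 \<le> b" using d unfolding desc_def by (cases b) auto
  have fw': "fp (sidx b \<circ> ?w)" by (rule fp_comp[OF fp_sidx fw])
  have w0': "(sidx b \<circ> ?w) 0 = 0" using w0 b1 by (simp add: sidx_def)
  obtain z where z: "red z" "word_perm z = sidx b \<circ> ?w" using red_exists[OF fw' w0'] by blast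
  have "red (b # z)" unfolding red_Cons_iff using b1 z desc_sidx_self[OF fw d] by simp
  moreover have "word_perm (b # z) = ?w" using z(2) by (simp add: fun_eq_iff)
  ultimately show ?thesis by blast
qed

lemma theta_word_Cons: "theta_word (a # u) = thetaop a \<circ> theta_word u"
  by (simp add: theta_word_def fun_eq_iff)

lemma theta_word_Nil: "theta_word [] = id"
  by (simp add: theta_word_def fun_eq_iff)

lemma len_red: "red ws \<Longrightarrow> length ws = ninv (word_perm ws)"
  by (simp add: red_def)

lemma W_adj:
  assumes IH: "\<And>y y'. length y < n \<Longrightarrow> red y \<Longrightarrow> red y' \<Longrightarrow> word_perm y = word_perm y' \<Longrightarrow> theta_word y = theta_word y'"
    and r1: "red (a # u)" and r2: "red (Suc a # v)" and e: "word_perm (a # u) = word_perm (Suc a # v)"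
    and n: "length (a # u) = n"
  shows "theta_word (a # u) = theta_word (Suc a # v)"
proof -
  define w where "w = word_perm (a # u)"
  have fw: "fp w" unfolding w_def by (rule fp_word)
  define f where "f = inv w"
  have d1: "f (Suc a) < f a" using desc_Cons[OF r1] unfolding desc_def f_def w_def .
  have d2: "f (Suc (Suc a)) < f (Suc a)" using desc_Cons[OF r2] unfolding desc_def f_def w_def e .
  have ru: "red u" and rv: "red v" using r1 r2 red_Cons_iff by blast+
  have lv: "length v = length u" using len_red[OF r1] len_red[OF r2] e by simp
  have wu: "word_perm u = sidx a \<circ> w" unfolding w_def by (rule sidx_cancel) simp
  have wv: "word_perm v = sidx (Suc a) \<circ> w" unfolding w_def e by (rule sidx_cancel) simp
  have "desc (word_perm u) (Suc a)" unfolding wu desc_sc[OF fw] f_def[symmetric]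
    using d1 d2 by (simp add: sidx_def)
  then obtain z1 where z1: "red (Suc a # z1)" "word_perm (Suc a # z1) = word_perm u"
    using get_cons[OF ru] by blast
  have t1: "theta_word u = theta_word (Suc a # z1)" using IH[OF _ ru z1(1) z1(2)[symmetric]] n by simp
  have rz1: "red z1" using z1(1) red_Cons_iff by blast
  have wz1: "word_perm z1 = sidx (Suc a) \<circ> (sidx a \<circ> w)" using z1(2) wu by (metis sidx_cancel word_perm_Cons)
  have fw1: "fp (sidx a \<circ> w)" by (rule fp_comp[OF fp_sidx fw])
  have "desc (word_perm z1) a" unfolding wz1 desc_sc[OF fw1] inv_sc[OF fw] f_def[symmetric]
    using d1 d2 by (simp add: sidx_def)
  then obtain z where z: "red (a # z)" "word_perm (a # z) = word_perm z1"
    using get_cons[OF rz1] by blast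
  have lz1: "length z1 < n"
  proof -
    have "Suc (length z1) = length u" using len_red[OF z1(1)] len_red[OF ru] z1(2) by simp
    thus ?thesis using n by simp
  qed
  have t2: "theta_word z1 = theta_word (a # z)" using IH[OF lz1 rz1 z(1) z(2)[symmetric]] .
  have rz: "red z" using z(1) red_Cons_iff by blast
  have wz: "word_perm z = sidx a \<circ> (sidx (Suc a) \<circ> (sidx a \<circ> w))" using z(2) wz1 by (metis sidx_cancel word_perm_Cons)
  have "desc (word_perm v) a" unfolding wv desc_sc[OF fw] f_def[symmetric]
    using d1 d2 by (simp add: sidx_def)
  then obtain y1 where y1: "red (a # y1)" "word_perm (a # y1) = word_perm v"
    using get_cons[OF rv] by blast
  have lv': "length v < n" using n lv by simp
  have t3: "theta_word v = theta_word (a # y1)" using IH[OF lv' rv y1(1) y1(2)[symmetric]] .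
  have ry1: "red y1" using y1(1) red_Cons_iff by blast
  have wy1: "word_perm y1 = sidx a \<circ> (sidx (Suc a) \<circ> w)" using y1(2) wv by (metis sidx_cancel word_perm_Cons)
  have fw2: "fp (sidx (Suc a) \<circ> w)" by (rule fp_comp[OF fp_sidx fw])
  have "desc (word_perm y1) (Suc a)" unfolding wy1 desc_sc[OF fw2] inv_sc[OF fw] f_def[symmetric]
    using d1 d2 by (simp add: sidx_def)
  then obtain y where y: "red (Suc a # y)" "word_perm (Suc a # y) = word_perm y1"
    using get_cons[OF ry1] by blast
  have ly1: "length y1 < n"
  proof -
    have "Suc (length y1) = length v" using len_red[OF y1(1)] len_red[OF rv] y1(2) by simp
    thus ?thesis using n lv by simp
  qed
  have t4: "theta_word y1 = theta_word (Suc a # y)" using IH[OF ly1 ry1 y(1) y(2)[symmetric]] .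
  have ry: "red y" using y(1) red_Cons_iff by blast
  have wy: "word_perm y = sidx (Suc a) \<circ> (sidx a \<circ> (sidx (Suc a) \<circ> w))" using y(2) wy1 by (metis sidx_cancel word_perm_Cons)
  have wyz: "word_perm y = word_perm z" unfolding wy wz by (simp add: fun_eq_iff sidx_braid)
  have ly: "length y < n"
  proof -
    have "length y = length z" using len_red[OF ry] len_red[OF rz] wyz by simp
    moreover have "Suc (length z) = length z1" using len_red[OF z(1)] len_red[OF rz1] z(2) by simp
    ultimately show ?thesis using lz1 by simp
  qed
  have t5: "theta_word y = theta_word z" using IH[OF ly ry rz wyz] .
  have "theta_word (a # u) = thetaop a \<circ> thetaop (Suc a) \<circ> thetaop a \<circ> theta_word z"
    by (simp add: theta_word_Cons t1 t2 comp_assoc)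
  also have "\<dots> = thetaop (Suc a) \<circ> thetaop a \<circ> thetaop (Suc a) \<circ> theta_word y"
    by (simp add: t5 fun_eq_iff theta_braid)
  also have "\<dots> = theta_word (Suc a # v)"
    by (simp add: theta_word_Cons t3 t4 comp_assoc)
  finally show ?thesis .
qed

lemma W_main:
  "red ws \<Longrightarrow> red ws' \<Longrightarrow> word_perm ws = word_perm ws' \<Longrightarrow> theta_word ws = theta_word ws'"
proof (induct "length ws" arbitrary: ws ws' rule: less_induct)
  case less
  have IH: "\<And>y y'. length y < length ws \<Longrightarrow> red y \<Longrightarrow> red y' \<Longrightarrow> word_perm y = word_perm y' \<Longrightarrow> theta_word y = theta_word y'"
    using less.hyps by blast
  have ll: "length ws' = length ws" using len_red[OF less.prems(1)] len_red[OF less.prems(2)] less.prems(3) by simp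
  show ?case
  proof (cases ws)
    case Nil
    thus ?thesis using ll by simp
  next
    case (Cons a u)
    then obtain b v where ws': "ws' = b # v" using ll by (cases ws') auto
    have r1: "red (a # u)" and r2: "red (b # v)" using less.prems Cons ws' by simp_all
    have e: "word_perm (a # u) = word_perm (b # v)" using less.prems Cons ws' by simp
    define w where "w = word_perm (a # u)"
    have fw: "fp w" unfolding w_def by (rule fp_word)
    have da: "desc w a" using desc_Cons[OF r1] unfolding w_def .
    have db: "desc w b" using desc_Cons[OF r2] unfolding w_def e .
    have ru: "red u" and rv: "red v" using r1 r2 red_Cons_iff by blast+
    have wu: "word_perm u = sidx a \<circ> w" unfolding w_def by (rule sidx_cancel) simp
    have wv: "word_perm v = sidx b \<circ> w" unfolding w_def e by (rule sidx_cancel) simp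
    have lu: "length u < length ws" using Cons by simp
    have lv: "length v < length ws" using ll ws' by simp
    consider "a = b" | "Suc a < b \<or> Suc b < a" | "b = Suc a" | "a = Suc b" by linarith
    thus ?thesis
    proof cases
      case 1
      have "theta_word u = theta_word v" using IH[OF lu ru rv] wu wv 1 by simp
      thus ?thesis using Cons ws' 1 by (simp add: theta_word_Cons)
    next
      case 2
      have "desc (word_perm u) b" unfolding wu using desc_comm[OF fw, of b a] 2 db by auto
      then obtain z1 where z1: "red (b # z1)" "word_perm (b # z1) = word_perm u"
        using get_cons[OF ru] by blast
      have t1: "theta_word u = theta_word (b # z1)" using IH[OF lu ru z1(1) z1(2)[symmetric]] .
      have rz1: "red z1" using z1(1) red_Cons_iff by blast
      have wz1: "word_perm z1 = sidx b \<circ> (sidx a \<circ> w)" using z1(2) wu by (metis sidx_cancel word_perm_Cons)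
      have wz1': "word_perm z1 = sidx a \<circ> (sidx b \<circ> w)"
        unfolding wz1 using sidx_comm[of a b] 2 by (auto simp: fun_eq_iff)
      have fwb: "fp (sidx b \<circ> w)" by (rule fp_comp[OF fp_sidx fw])
      have dba: "desc (sidx b \<circ> w) a" using desc_comm[OF fw, of a b] 2 da by auto
      have "red (a # z1)" unfolding red_Cons_iff
        using rz1 red_letters[OF r1] desc_sidx_self[OF fwb dba] wz1' by simp
      moreover have "word_perm (a # z1) = word_perm v" using wz1' wv by (simp add: fun_eq_iff)
      ultimately have t2: "theta_word v = theta_word (a # z1)" using IH[OF lv rv] by metis
      have "theta_word ws = thetaop a \<circ> thetaop b \<circ> theta_word z1"
        using Cons t1 by (simp add: theta_word_Cons comp_assoc)
      also have "\<dots> = thetaop b \<circ> thetaop a \<circ> theta_word z1"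
        using theta_comm[of a b] 2 by (auto simp: fun_eq_iff)
      also have "\<dots> = theta_word ws'"
        using ws' t2 by (simp add: theta_word_Cons comp_assoc)
      finally show ?thesis .
    next
      case 3
      have r2': "red (Suc a # v)" using r2 3 by simp
      have e': "word_perm (a # u) = word_perm (Suc a # v)" using e 3 by simp
      have l': "length (a # u) = length ws" using Cons by simp
      have "theta_word (a # u) = theta_word (Suc a # v)"
        by (rule W_adj[OF IH r1 r2' e' l'])
      thus ?thesis using Cons ws' 3 by simp
    next
      case 4
      have r1': "red (Suc b # u)" using r1 4 by simp
      have e': "word_perm (b # v) = word_perm (Suc b # u)" using e 4 by simp
      have l': "length (b # v) = length ws" using ll ws' by simp
      have "theta_word (b # v) = theta_word (Suc b # u)"
        by (rule W_adj[OF IH r2 r1' e' l'])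
      thus ?thesis using Cons ws' 4 by simp
    qed
  qed
qed

lemma theta_perm_red: "red ws \<Longrightarrow> theta_perm (word_perm ws) = theta_word ws"
proof -
  assume r: "red ws"
  have "reduced_word ws (word_perm ws)" using r reduced_word_iff by blast
  hence "reduced_word (SOME ws'. reduced_word ws' (word_perm ws)) (word_perm ws)" by (rule someI)
  hence "red (SOME ws'. reduced_word ws' (word_perm ws))" "word_perm (SOME ws'. reduced_word ws' (word_perm ws)) = word_perm ws"
    using reduced_word_iff by blast+
  thus ?thesis unfolding theta_perm_def using W_main r by blast
qed



lemma len_sort_dec[simp]: "length (sort_dec g) = length g"
  by (simp add: sort_dec_def)

lemma sort_dec_mono: "i \<le> j \<Longrightarrow> j < length g \<Longrightarrow> sort_dec g ! j \<le> sort_dec g ! i"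
  unfolding sort_dec_def
  by (simp add: rev_nth sorted_nth_mono)

lemma sort_dec_mset: "mset g = mset g' \<Longrightarrow> sort_dec g = sort_dec g'"
  unfolding sort_dec_def using properties_for_sort[of "sort g'" g] by simp

lemma mset_sort_dec: "mset (sort_dec g) = mset g"
  by (simp add: sort_dec_def)

definition Mp :: "nat list \<Rightarrow> (nat \<Rightarrow> nat) \<Rightarrow> bool" where
  "Mp g w \<longleftrightarrow> w permutes {1..length g} \<and> (\<forall>q\<in>{1..length g}. sort_dec g ! (q - 1) = g ! (w q - 1))"

lemma comp_act_iff:
  assumes w: "w permutes {1..length g}"
  shows "comp_act w (sort_dec g) = g \<longleftrightarrow> (\<forall>q\<in>{1..length g}. sort_dec g ! (q - 1) = g ! (w q - 1))"
proof -
  let ?n = "length g"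
  have "comp_act w (sort_dec g) = g \<longleftrightarrow> (\<forall>j<?n. sort_dec g ! (inv w (Suc j) - 1) = g ! j)"
    unfolding comp_act_def list_eq_iff_nth_eq by simp
  also have "\<dots> \<longleftrightarrow> (\<forall>p\<in>{1..?n}. sort_dec g ! (inv w p - 1) = g ! (p - 1))"
  proof
    assume h: "\<forall>j<?n. sort_dec g ! (inv w (Suc j) - 1) = g ! j"
    show "\<forall>p\<in>{1..?n}. sort_dec g ! (inv w p - 1) = g ! (p - 1)"
    proof
      fix p assume "p \<in> {1..?n}"
      then obtain j where "p = Suc j" "j < ?n" by (cases p) auto
      thus "sort_dec g ! (inv w p - 1) = g ! (p - 1)" using h by simp
    qed
  next
    assume h: "\<forall>p\<in>{1..?n}. sort_dec g ! (inv w p - 1) = g ! (p - 1)"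
    show "\<forall>j<?n. sort_dec g ! (inv w (Suc j) - 1) = g ! j"
    proof (intro allI impI)
      fix j assume "j < ?n"
      hence "Suc j \<in> {1..?n}" by simp
      from h[rule_format, OF this] show "sort_dec g ! (inv w (Suc j) - 1) = g ! j" by simp
    qed
  qed
  also have "\<dots> \<longleftrightarrow> (\<forall>q\<in>{1..?n}. sort_dec g ! (q - 1) = g ! (w q - 1))"
  proof
    assume h: "\<forall>p\<in>{1..?n}. sort_dec g ! (inv w p - 1) = g ! (p - 1)"
    show "\<forall>q\<in>{1..?n}. sort_dec g ! (q - 1) = g ! (w q - 1)"
    proof
      fix q assume q: "q \<in> {1..?n}"
      hence "w q \<in> {1..?n}" using permutes_in_image[OF w] by blast
      from h[rule_format, OF this] show "sort_dec g ! (q - 1) = g ! (w q - 1)"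
        by (simp add: permutes_inverses(2)[OF w])
    qed
  next
    assume h: "\<forall>q\<in>{1..?n}. sort_dec g ! (q - 1) = g ! (w q - 1)"
    show "\<forall>p\<in>{1..?n}. sort_dec g ! (inv w p - 1) = g ! (p - 1)"
    proof
      fix p assume p: "p \<in> {1..?n}"
      hence "inv w p \<in> {1..?n}" using permutes_in_image[OF permutes_inv[OF w]] by blast
      from h[rule_format, OF this] show "sort_dec g ! (inv w p - 1) = g ! (p - 1)"
        by (simp add: permutes_inverses(1)[OF w])
    qed
  qed
  finally show ?thesis .
qed

lemma permutes_fp: "w permutes {1..n} \<Longrightarrow> fp w"
proof -
  assume w: "w permutes {1..n}"
  have "{1..n} \<subseteq> {..<Suc n}" by auto
  hence "w permutes {..<Suc n}" using permutes_subset[OF w] by blast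
  thus "fp w" unfolding fp_def by blast
qed

lemma permutes_0: "(w::nat\<Rightarrow>nat) permutes {1..n} \<Longrightarrow> w 0 = 0"
proof -
  assume h: "w permutes {1..n}"
  have "(0::nat) \<notin> {1..n}" by simp
  thus "w 0 = 0" using h unfolding permutes_def by blast
qed

lemma Mp_perm_length: "Mp g w \<Longrightarrow> perm_length w = ninv w"
  unfolding Mp_def using perm_length_eq permutes_fp permutes_0 by blast

lemma Mp_exists: "\<exists>w. Mp g w"
proof -
  let ?n = "length g"
  have "mset (sort_dec g) = mset g" by (rule mset_sort_dec)
  then obtain p where p: "p permutes {..<?n}" "permute_list p g = sort_dec g"
    by (rule mset_eq_permutation)
  have pj: "sort_dec g ! j = g ! p j" if "j < ?n" for j
  proof -
    have "permute_list p g ! j = g ! p j" using that by (simp add: permute_list_def)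
    thus ?thesis using p(2) by simp
  qed
  define w where "w x = (if x \<in> {1..?n} then Suc (p (x - 1)) else x)" for x
  have wx: "w x = Suc (p (x - 1))" if "x \<in> {1..?n}" for x using that by (simp add: w_def)
  have px: "p (x - 1) < ?n" if "x \<in> {1..?n}" for x
  proof -
    have "x - 1 \<in> {..<?n}" using that by auto
    hence "p (x - 1) \<in> {..<?n}" using permutes_in_image[OF p(1)] by blast
    thus ?thesis by simp
  qed
  have inj: "inj_on w {1..?n}"
  proof
    fix x y assume x: "x \<in> {1..?n}" and y: "y \<in> {1..?n}" and e: "w x = w y"
    have "p (x - 1) = p (y - 1)" using e wx[OF x] wx[OF y] by simp
    hence "x - 1 = y - 1" using permutes_inj[OF p(1)] by (meson injD)
    thus "x = y" using x y by auto
  qed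
  have img: "w ` {1..?n} \<subseteq> {1..?n}"
  proof
    fix y assume "y \<in> w ` {1..?n}"
    then obtain x where x: "x \<in> {1..?n}" "y = w x" by blast
    show "y \<in> {1..?n}" using x wx[OF x(1)] px[OF x(1)] by simp
  qed
  have "bij_betw w {1..?n} {1..?n}" using inj endo_inj_surj[OF _ img inj] by (simp add: bij_betw_def)
  hence wp: "w permutes {1..?n}" by (rule bij_imp_permutes) (auto simp: w_def)
  have "\<forall>q\<in>{1..?n}. sort_dec g ! (q - 1) = g ! (w q - 1)"
  proof
    fix q assume q: "q \<in> {1..?n}"
    have "q - 1 < ?n" using q by auto
    thus "sort_dec g ! (q - 1) = g ! (w q - 1)" using pj wx[OF q] by simp
  qed
  thus ?thesis unfolding Mp_def using wp by blast
qed

lemma min_perm_Mp: "Mp g (min_perm g)" and min_perm_min: "Mp g w \<Longrightarrow> ninv (min_perm g) \<le> ninv w"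
proof -
  obtain w0 where w0: "Mp g w0" using Mp_exists by blast
  have eq: "(\<lambda>w. w permutes {1..length g} \<and> comp_act w (sort_dec g) = g) = Mp g"
  proof
    fix w show "(w permutes {1..length g} \<and> comp_act w (sort_dec g) = g) = Mp g w"
      unfolding Mp_def using comp_act_iff[of w g] by blast
  qed
  have mp: "min_perm g = arg_min perm_length (Mp g)" unfolding min_perm_def eq ..
  show "Mp g (min_perm g)" unfolding mp using arg_min_nat_lemma[of "Mp g" w0 perm_length] w0 by blast
  show "Mp g w \<Longrightarrow> ninv (min_perm g) \<le> ninv w"
  proof -
    assume w: "Mp g w"
    have "perm_length (min_perm g) \<le> perm_length w" unfolding mp by (rule arg_min_nat_le[of "Mp g" w perm_length, OF w])
    moreover have "Mp g (min_perm g)" unfolding mp using arg_min_nat_lemma[of "Mp g" w0 perm_length] w0 by blast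
    ultimately show ?thesis using Mp_perm_length w by metis
  qed
qed


definition isMin :: "nat list \<Rightarrow> (nat \<Rightarrow> nat) \<Rightarrow> bool" where
  "isMin g w \<longleftrightarrow> Mp g w \<and> (\<forall>w'. Mp g w' \<longrightarrow> ninv w \<le> ninv w')"

lemma isMin_min_perm: "isMin g (min_perm g)"
  unfolding isMin_def using min_perm_Mp min_perm_min by blast

definition BI :: "nat list \<Rightarrow> (nat \<Rightarrow> nat) \<Rightarrow> bool" where
  "BI g w \<longleftrightarrow> (\<forall>q q'. 1 \<le> q \<longrightarrow> q < q' \<longrightarrow> q' \<le> length g \<longrightarrow> sort_dec g ! (q - 1) = sort_dec g ! (q' - 1) \<longrightarrow> w q < w q')"

lemma Mp_perm: "Mp g w \<Longrightarrow> w permutes {1..length g}"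
  by (simp add: Mp_def)

lemma Mp_val: "Mp g w \<Longrightarrow> q \<in> {1..length g} \<Longrightarrow> sort_dec g ! (q - 1) = g ! (w q - 1)"
  by (simp add: Mp_def)

lemma Mp_fp: "Mp g w \<Longrightarrow> fp w"
  by (rule permutes_fp[OF Mp_perm])

lemma Mp_in: assumes "Mp g w" "q \<in> {1..length g}" shows "w q \<in> {1..length g}"
  using permutes_in_image[OF Mp_perm[OF assms(1)]] assms(2) by simp

lemma sort_dec_dec: "1 \<le> q \<Longrightarrow> q \<le> q' \<Longrightarrow> q' \<le> length g \<Longrightarrow> sort_dec g ! (q' - 1) \<le> sort_dec g ! (q - 1)"
  using sort_dec_mono[of "q - 1" "q' - 1" g] by simp

lemma min_adj:
  assumes m: "isMin g w" and q: "1 \<le> q" "Suc q \<le> length g" and e: "sort_dec g ! (q - 1) = sort_dec g ! q"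
  shows "w q < w (Suc q)"
proof (rule ccontr)
  let ?n = "length g"
  assume "\<not> w q < w (Suc q)"
  have Mw: "Mp g w" using m isMin_def by blast
  have "w q \<noteq> w (Suc q)" using permutes_inj[OF Mp_perm[OF Mw]] by (metis injD n_not_Suc_n)
  hence lt: "w (Suc q) < w q" using \<open>\<not> w q < w (Suc q)\<close> by simp
  have sp: "sidx q permutes {1..?n}" by (rule sidx_permutes) (use q in auto)
  have "Mp g (w \<circ> sidx q)"
    unfolding Mp_def
  proof (intro conjI ballI)
    show "w \<circ> sidx q permutes {1..?n}" by (rule permutes_compose[OF sp Mp_perm[OF Mw]])
    fix x assume x: "x \<in> {1..?n}"
    have sx: "sidx q x \<in> {1..?n}" using permutes_in_image[OF sp] x by simp
    have "sort_dec g ! (sidx q x - 1) = sort_dec g ! (x - 1)"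
      using e q by (auto simp: sidx_def)
    thus "sort_dec g ! (x - 1) = g ! ((w \<circ> sidx q) x - 1)" using Mp_val[OF Mw sx] by simp
  qed
  moreover have "ninv (w \<circ> sidx q) < ninv w" by (rule ninv_right_less[OF Mp_fp[OF Mw] lt])
  ultimately show False using m unfolding isMin_def by (meson not_less)
qed

lemma min_BI: assumes m: "isMin g w" shows "BI g w"
  unfolding BI_def
proof (intro allI impI)
  fix q q' assume q: "1 \<le> q" and qq: "q < q'" and q'n: "q' \<le> length g" and e: "sort_dec g ! (q - 1) = sort_dec g ! (q' - 1)"
  show "w q < w q'" using qq q'n e
  proof (induct q')
    case 0 then show ?case by simp
  next
    case (Suc m)
    show ?case
    proof (cases "q = m")
      case True
      thus ?thesis using min_adj[OF m q] Suc.prems by simp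
    next
      case False
      hence qm: "q < m" using Suc.prems by simp
      have "sort_dec g ! (m - 1) \<le> sort_dec g ! (q - 1)" using sort_dec_dec[of q m g] q qm Suc.prems by simp
      moreover have "sort_dec g ! (Suc m - 1) \<le> sort_dec g ! (m - 1)" using sort_dec_dec[of m "Suc m" g] q qm Suc.prems by simp
      ultimately have em: "sort_dec g ! (m - 1) = sort_dec g ! (q - 1)" using Suc.prems by simp
      have "w q < w m" using Suc.hyps[OF qm] Suc.prems em by simp
      moreover have "w m < w (Suc m)"
        using min_adj[OF m, of m] q qm Suc.prems em by (simp add: nat_diff_split_asm)
      ultimately show ?thesis by simp
    qed
  qed
qed

lemma BI_D: "BI g w \<Longrightarrow> 1 \<le> q \<Longrightarrow> q < q' \<Longrightarrow> q' \<le> length g \<Longrightarrow> sort_dec g ! (q - 1) = sort_dec g ! (q' - 1) \<Longrightarrow> w q < w q'"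
  unfolding BI_def by blast

lemma count_eq:
  assumes M: "Mp g w" and B: "BI g w" and q: "q \<in> {1..length g}"
  shows "card {p. p \<in> {1..length g} \<and> g ! (p - 1) = sort_dec g ! (q - 1) \<and> p < w q}
       = card {q'. q' \<in> {1..length g} \<and> sort_dec g ! (q' - 1) = sort_dec g ! (q - 1) \<and> q' < q}"
proof -
  let ?n = "length g"
  let ?A = "{q'. q' \<in> {1..?n} \<and> sort_dec g ! (q' - 1) = sort_dec g ! (q - 1) \<and> q' < q}"
  let ?C = "{p. p \<in> {1..?n} \<and> g ! (p - 1) = sort_dec g ! (q - 1) \<and> p < w q}"
  have wp: "w permutes {1..?n}" by (rule Mp_perm[OF M])
  have "w ` ?A = ?C"
  proof
    show "w ` ?A \<subseteq> ?C"
    proof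
      fix p assume "p \<in> w ` ?A"
      then obtain q' where q': "q' \<in> ?A" "p = w q'" by blast
      have q'1: "q' \<in> {1..?n}" and lq: "sort_dec g ! (q' - 1) = sort_dec g ! (q - 1)" and qq: "q' < q"
        using q'(1) by simp_all
      have "w q' < w q" using BI_D[OF B _ qq _ lq] q'1 q by simp
      moreover have "w q' \<in> {1..?n}" by (rule Mp_in[OF M q'1])
      moreover have "g ! (w q' - 1) = sort_dec g ! (q - 1)" using Mp_val[OF M q'1] lq by simp
      ultimately show "p \<in> ?C" using q'(2) by simp
    qed
    show "?C \<subseteq> w ` ?A"
    proof
      fix p assume p: "p \<in> ?C"
      define q' where "q' = inv w p"
      have q'1: "q' \<in> {1..?n}" unfolding q'_def using p permutes_in_image[OF permutes_inv[OF wp]] by simp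
      have wq': "w q' = p" unfolding q'_def using permutes_inverses(1)[OF wp] by simp
      have lq': "sort_dec g ! (q' - 1) = sort_dec g ! (q - 1)" using Mp_val[OF M q'1] wq' p by simp
      have "q' < q"
      proof (rule ccontr)
        assume "\<not> q' < q"
        hence "q' = q \<or> q < q'" by auto
        thus False
        proof
          assume "q' = q" thus False using wq' p by simp
        next
          assume "q < q'"
          hence "w q < w q'" using BI_D[OF B _ _ _ lq'[symmetric]] q q'1 by simp
          thus False using wq' p by simp
        qed
      qed
      thus "p \<in> w ` ?A" using q'1 lq' wq' by blast
    qed
  qed
  moreover have "inj_on w ?A" using permutes_inj[OF wp] by (rule inj_on_subset) simp
  ultimately show ?thesis using card_image by fastforce
qed

lemma BI_unique:
  assumes M: "Mp g w" "Mp g w'" and B: "BI g w" "BI g w'"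
  shows "w = w'"
proof
  fix x
  let ?n = "length g"
  show "w x = w' x"
  proof (cases "x \<in> {1..?n}")
    case False
    thus ?thesis using permutes_not_in[OF Mp_perm[OF M(1)]] permutes_not_in[OF Mp_perm[OF M(2)]] by simp
  next
    case True
    have less: False if "Mp g u" "Mp g u'" "BI g u" "BI g u'" "u x < u' x" for u u'
    proof -
      let ?C = "\<lambda>y. {p. p \<in> {1..?n} \<and> g ! (p - 1) = sort_dec g ! (x - 1) \<and> p < y}"
      have "?C (u x) \<subset> ?C (u' x)"
      proof
        show "?C (u x) \<subseteq> ?C (u' x)" using that(5) by auto
        have "u x \<in> ?C (u' x)" using Mp_in[OF that(1) True] Mp_val[OF that(1) True] that(5) by simp
        moreover have "u x \<notin> ?C (u x)" by simp
        ultimately show "?C (u x) \<noteq> ?C (u' x)" by blast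
      qed
      hence "card (?C (u x)) < card (?C (u' x))" by (rule psubset_card_mono[rotated]) auto
      thus False using count_eq[OF that(1) that(3) True] count_eq[OF that(2) that(4) True] by simp
    qed
    show ?thesis using less[OF M B] less[OF M(2) M(1) B(2) B(1)] by (meson linorder_neqE_nat)
  qed
qed

lemma isMin_eq: "isMin g w \<Longrightarrow> w = min_perm g"
  using BI_unique isMin_min_perm min_BI isMin_def by metis


definition swp :: "nat \<Rightarrow> nat list \<Rightarrow> nat list" where
  "swp i g = g[i - 1 := g ! i, i := g ! (i - 1)]"

lemma len_swp[simp]: "length (swp i g) = length g"
  by (simp add: swp_def)

lemma swp_nth:
  assumes i: "1 \<le> i" "Suc i \<le> length g" and p: "p \<in> {1..length g}"
  shows "swp i g ! (p - 1) = g ! (sidx i p - 1)"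
proof -
  have "i - 1 \<noteq> i" using i by simp
  thus ?thesis using i p by (auto simp: swp_def sidx_def nth_list_update)
qed

lemma sort_dec_swp: "1 \<le> i \<Longrightarrow> Suc i \<le> length g \<Longrightarrow> sort_dec (swp i g) = sort_dec g"
  unfolding swp_def by (rule sort_dec_mset) (rule mset_swap; simp)

lemma swp_swp: "1 \<le> i \<Longrightarrow> Suc i \<le> length g \<Longrightarrow> swp i (swp i g) = g"
  by (rule nth_equalityI) (auto simp: swp_def nth_list_update)

lemma sidx_in: "1 \<le> i \<Longrightarrow> Suc i \<le> n \<Longrightarrow> p \<in> {1..n} \<Longrightarrow> sidx i p \<in> {1..n}"
  by (auto simp: sidx_def)

lemma Mp_swap:
  assumes M: "Mp g u" and i: "1 \<le> i" "Suc i \<le> length g"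
  shows "Mp (swp i g) (sidx i \<circ> u)"
  unfolding Mp_def len_swp
proof (intro conjI ballI)
  have sp: "sidx i permutes {1..length g}" by (rule sidx_permutes) (use i in auto)
  show "sidx i \<circ> u permutes {1..length g}" by (rule permutes_compose[OF Mp_perm[OF M] sp])
  fix q assume q: "q \<in> {1..length g}"
  have uq: "u q \<in> {1..length g}" by (rule Mp_in[OF M q])
  have "swp i g ! (sidx i (u q) - 1) = g ! (u q - 1)"
    using swp_nth[OF i sidx_in[OF i uq]] by simp
  thus "sort_dec (swp i g) ! (q - 1) = swp i g ! ((sidx i \<circ> u) q - 1)"
    using sort_dec_swp[OF i] Mp_val[OF M q] by simp
qed

lemma inv_in: "Mp g w \<Longrightarrow> p \<in> {1..length g} \<Longrightarrow> inv w p \<in> {1..length g}"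
  using permutes_in_image[OF permutes_inv[OF Mp_perm]] by simp

lemma inv_val: "Mp g w \<Longrightarrow> p \<in> {1..length g} \<Longrightarrow> sort_dec g ! (inv w p - 1) = g ! (p - 1)"
  using Mp_val[OF _ inv_in] permutes_inverses(1)[OF Mp_perm] by metis

lemma not_desc_of:
  assumes M: "Mp g w" and i: "1 \<le> i" "Suc i \<le> length g" and lt: "g ! i < g ! (i - 1)"
  shows "\<not> desc w i"
proof
  assume d: "desc w i"
  have i1: "i \<in> {1..length g}" and i2: "Suc i \<in> {1..length g}" using i by auto
  have "sort_dec g ! (inv w i - 1) \<le> sort_dec g ! (inv w (Suc i) - 1)"
    using sort_dec_dec[of "inv w (Suc i)" "inv w i" g] d inv_in[OF M i1] inv_in[OF M i2]
    unfolding desc_def by simp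
  thus False using inv_val[OF M i1] inv_val[OF M i2] lt by simp
qed

lemma desc_of:
  assumes M: "Mp g w" and i: "1 \<le> i" "Suc i \<le> length g" and lt: "g ! (i - 1) < g ! i"
  shows "desc w i"
proof (rule ccontr)
  assume d: "\<not> desc w i"
  have i1: "i \<in> {1..length g}" and i2: "Suc i \<in> {1..length g}" using i by auto
  have ne: "inv w i \<noteq> inv w (Suc i)" using permutes_inv[OF Mp_perm[OF M]]
    by (metis permutes_inj injD n_not_Suc_n)
  have "sort_dec g ! (inv w (Suc i) - 1) \<le> sort_dec g ! (inv w i - 1)"
    using sort_dec_dec[of "inv w i" "inv w (Suc i)" g] d ne inv_in[OF M i1] inv_in[OF M i2]
    unfolding desc_def by simp
  thus False using inv_val[OF M i1] inv_val[OF M i2] lt by simp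
qed

lemma Mp_0: "Mp g w \<Longrightarrow> w 0 = 0"
  by (rule permutes_0[OF Mp_perm])

lemma atom_swap_gt:
  assumes i: "1 \<le> i" "Suc i \<le> length g" and lt: "g ! i < g ! (i - 1)"
  shows "atom (swp i g) = thetaop i (atom g)"
proof -
  let ?g' = "swp i g"
  define w where "w = min_perm g"
  have Mw: "Mp g w" unfolding w_def by (rule min_perm_Mp)
  have nd: "\<not> desc w i" by (rule not_desc_of[OF Mw i lt])
  have i': "1 \<le> i" "Suc i \<le> length ?g'" using i by simp_all
  have lt': "?g' ! (i - 1) < ?g' ! i" using lt i by (simp add: swp_def nth_list_update)
  have "isMin ?g' (sidx i \<circ> w)"
    unfolding isMin_def
  proof (intro conjI allI impI)
    show "Mp ?g' (sidx i \<circ> w)" by (rule Mp_swap[OF Mw i])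
    fix u assume Mu: "Mp ?g' u"
    have du: "desc u i" by (rule desc_of[OF Mu i' lt'])
    have "Mp g (sidx i \<circ> u)" using Mp_swap[OF Mu i'] swp_swp[OF i] by simp
    hence "ninv w \<le> ninv (sidx i \<circ> u)" using min_perm_min w_def by blast
    moreover have "ninv (sidx i \<circ> u) = ninv u - 1" "ninv u \<ge> 1"
      using ninv_left[OF Mp_fp[OF Mu], of i] du by auto
    moreover have "ninv (sidx i \<circ> w) = Suc (ninv w)"
      using ninv_left[OF Mp_fp[OF Mw], of i] nd by auto
    ultimately show "ninv (sidx i \<circ> w) \<le> ninv u" by simp
  qed
  hence mp': "min_perm ?g' = sidx i \<circ> w" using isMin_eq by metis
  obtain ws where ws: "red ws" "word_perm ws = w" using red_exists[OF Mp_fp[OF Mw] Mp_0[OF Mw]] by blast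
  have r: "red (i # ws)" unfolding red_Cons_iff using ws i nd by simp
  have "theta_perm (sidx i \<circ> w) = theta_word (i # ws)" using theta_perm_red[OF r] ws by simp
  moreover have "theta_perm w = theta_word ws" using theta_perm_red[OF ws(1)] ws by simp
  ultimately show ?thesis unfolding atom_def mp' sort_dec_swp[OF i] w_def[symmetric]
    by (simp add: theta_word_Cons)
qed


lemma xmon_sym:
  assumes q: "1 \<le> q" "Suc q \<le> length l" and e: "l ! (q - 1) = l ! q"
  shows "sact q (xmon l) = xmon l"
proof -
  let ?n = "length l"
  define t where "t j = sidx q (Suc j) - 1" for j
  have st: "sidx q (Suc j) = Suc (t j)" for j using q by (auto simp: t_def sidx_def)
  have "sact q (xmon l) = (\<Prod>j<?n. X (sidx q (Suc j)) ^ (l ! j))"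
    unfolding xmon_def by (simp add: sact_prod)
  also have "\<dots> = (\<Prod>k<?n. X (Suc k) ^ (l ! k))"
  proof (rule prod.reindex_bij_witness[of "{..<?n}" t t])
    show "t (t a) = a" if "a \<in> {..<?n}" for a using q by (auto simp: t_def sidx_def)
    show "t a \<in> {..<?n}" if "a \<in> {..<?n}" for a using q that by (auto simp: t_def sidx_def)
    show "t (t b) = b" if "b \<in> {..<?n}" for b using q by (auto simp: t_def sidx_def)
    show "t b \<in> {..<?n}" if "b \<in> {..<?n}" for b using q that by (auto simp: t_def sidx_def)
    show "X (Suc (t a)) ^ (l ! t a) = X (sidx q (Suc a)) ^ (l ! a)" if "a \<in> {..<?n}" for a
    proof -
      have "l ! t a = l ! a" using q e by (auto simp: t_def sidx_def)
      thus ?thesis by (simp add: st)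
    qed
  qed
  finally show ?thesis unfolding xmon_def .
qed

lemma theta_word_snoc: "theta_word (ws @ [q]) f = theta_word ws (thetaop q f)"
  by (simp add: theta_word_def)

lemma theta_word_zero: "theta_word ws 0 = 0"
  by (induct ws) (simp_all add: theta_word_def)

lemma red_snoc:
  assumes r: "red ws" and q: "1 \<le> q" and lt: "word_perm ws q < word_perm ws (Suc q)"
  shows "red (ws @ [q])"
proof -
  have "ninv (word_perm ws \<circ> sidx q) = Suc (ninv (word_perm ws))"
    using ninv_right[OF fp_word[of ws], of q] lt by simp
  thus ?thesis using r q unfolding red_def by (simp add: word_perm_snoc)
qed

lemma atom_eq_theta0:
  assumes i: "1 \<le> i" "Suc i \<le> length g" and eq: "g ! (i - 1) = g ! i"
  shows "thetaop i (atom g) = 0"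
proof -
  let ?n = "length g"
  define w where "w = min_perm g"
  have m: "isMin g w" unfolding w_def by (rule isMin_min_perm)
  have Mw: "Mp g w" using m isMin_def by blast
  have B: "BI g w" by (rule min_BI[OF m])
  have i1: "i \<in> {1..?n}" and i2: "Suc i \<in> {1..?n}" using i by auto
  define a where "a = inv w i"
  define b where "b = inv w (Suc i)"
  have a1: "a \<in> {1..?n}" and b1: "b \<in> {1..?n}" unfolding a_def b_def using inv_in[OF Mw] i1 i2 by auto
  have wa: "w a = i" and wb: "w b = Suc i" unfolding a_def b_def using permutes_inverses(1)[OF Mp_perm[OF Mw]] by auto
  have la: "sort_dec g ! (a - 1) = g ! (i - 1)" unfolding a_def by (rule inv_val[OF Mw i1])
  have lb: "sort_dec g ! (b - 1) = g ! i" unfolding b_def using inv_val[OF Mw i2] by simp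
  have lab: "sort_dec g ! (a - 1) = sort_dec g ! (b - 1)" using la lb eq by simp
  have ab: "a < b"
  proof (rule ccontr)
    assume "\<not> a < b"
    moreover have "a \<noteq> b" using wa wb by auto
    ultimately have "b < a" by simp
    hence "w b < w a" using BI_D[OF B _ _ _ lab[symmetric]] a1 b1 by simp
    thus False using wa wb by simp
  qed
  have bSa: "b = Suc a"
  proof (rule ccontr)
    assume "b \<noteq> Suc a"
    hence lt: "Suc a < b" using ab by simp
    have "sort_dec g ! (Suc a - 1) \<le> sort_dec g ! (a - 1)" using sort_dec_dec[of a "Suc a" g] a1 b1 lt by simp
    moreover have "sort_dec g ! (b - 1) \<le> sort_dec g ! (Suc a - 1)" using sort_dec_dec[of "Suc a" b g] a1 b1 lt by simp
    ultimately have l1: "sort_dec g ! (a - 1) = sort_dec g ! (Suc a - 1)" using lab by simp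
    have "w a < w (Suc a)" using BI_D[OF B _ _ _ l1] a1 b1 lt by simp
    moreover have "w (Suc a) < w b" using BI_D[OF B _ lt _] a1 b1 l1 lab by simp
    ultimately show False using wa wb by simp
  qed
  have comm: "sidx i \<circ> w = w \<circ> sidx a"
  proof
    fix x
    show "(sidx i \<circ> w) x = (w \<circ> sidx a) x"
    proof (cases "x = a \<or> x = Suc a")
      case True
      thus ?thesis using wa wb bSa by (auto simp: sidx_def)
    next
      case False
      have "w x \<noteq> i" "w x \<noteq> Suc i" using False wa wb bSa permutes_inj[OF Mp_perm[OF Mw]] by (metis injD)+
      thus ?thesis using False by (simp add: sidx_def)
    qed
  qed
  obtain ws where ws: "red ws" "word_perm ws = w" using red_exists[OF Mp_fp[OF Mw] Mp_0[OF Mw]] by blast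
  have nd: "\<not> desc w i" unfolding desc_def a_def[symmetric] b_def[symmetric] using ab by simp
  have r1: "red (i # ws)" unfolding red_Cons_iff using ws i nd by simp
  have a_ge: "1 \<le> a" using a1 by simp
  have r2: "red (ws @ [a])" by (rule red_snoc[OF ws(1) a_ge]) (use ws wa wb bSa in simp)
  have "word_perm (i # ws) = word_perm (ws @ [a])" using ws comm by (simp add: word_perm_snoc)
  hence tw: "theta_word (i # ws) = theta_word (ws @ [a])" using W_main r1 r2 by blast
  have sym: "sact a (xmon (sort_dec g)) = xmon (sort_dec g)"
    by (rule xmon_sym) (use a1 b1 bSa lab in simp_all)
  have "thetaop i (atom g) = theta_word (i # ws) (xmon (sort_dec g))"
    unfolding atom_def w_def[symmetric] using theta_perm_red[OF ws(1)] ws by (simp add: theta_word_Cons)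
  also have "\<dots> = 0" unfolding tw theta_word_snoc theta_sym[OF sym] theta_word_zero ..
  finally show ?thesis .
qed


lemma sort_dec_snoc0: "sort_dec (g @ [0]) = sort_dec g @ [0]"
proof -
  have "sort (g @ [0]) = 0 # sort g"
    by (rule properties_for_sort) simp_all
  thus ?thesis by (simp add: sort_dec_def)
qed

lemma xmon_snoc0: "xmon (l @ [0]) = xmon l"
proof -
  have "xmon (l @ [0]) = (\<Prod>j<Suc (length l). X (Suc j) ^ ((l @ [0]) ! j))" by (simp add: xmon_def)
  also have "\<dots> = (\<Prod>j<length l. X (Suc j) ^ ((l @ [0]) ! j))" by (simp add: prod.lessThan_Suc)
  also have "\<dots> = xmon l" unfolding xmon_def by (rule prod.cong) (auto simp: nth_append)
  finally show ?thesis .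
qed

lemma min_perm_snoc0: "min_perm (g @ [0]) = min_perm g"
proof -
  let ?n = "length g"
  let ?g = "g @ [0]"
  define w where "w = min_perm g"
  have m: "isMin g w" unfolding w_def by (rule isMin_min_perm)
  have Mw: "Mp g w" using m isMin_def by blast
  have B: "BI g w" by (rule min_BI[OF m])
  have wp: "w permutes {1..?n}" by (rule Mp_perm[OF Mw])
  have wn: "w (Suc ?n) = Suc ?n" using permutes_not_in[OF wp] by simp
  have M': "Mp ?g w"
    unfolding Mp_def
  proof (intro conjI ballI)
    show "w permutes {1..length ?g}" by (rule permutes_subset[OF wp]) auto
    fix q assume q: "q \<in> {1..length ?g}"
    show "sort_dec ?g ! (q - 1) = ?g ! (w q - 1)"
    proof (cases "q \<le> ?n")
      case True
      hence q1: "q \<in> {1..?n}" using q by simp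
      have "w q \<in> {1..?n}" by (rule Mp_in[OF Mw q1])
      thus ?thesis using Mp_val[OF Mw q1] q1 by (auto simp: sort_dec_snoc0 nth_append)
    next
      case False
      hence "q = Suc ?n" using q by simp
      thus ?thesis using wn by (simp add: sort_dec_snoc0 nth_append)
    qed
  qed
  have B': "BI ?g w"
    unfolding BI_def
  proof (intro allI impI)
    fix q q' assume h: "1 \<le> q" "q < q'" "q' \<le> length ?g" "sort_dec ?g ! (q - 1) = sort_dec ?g ! (q' - 1)"
    show "w q < w q'"
    proof (cases "q' \<le> ?n")
      case True
      have lt: "q - 1 < ?n" "q' - 1 < ?n" using h True by auto
      have "sort_dec g ! (q - 1) = sort_dec g ! (q' - 1)" using h(4) lt by (simp add: sort_dec_snoc0 nth_append)
      thus ?thesis using BI_D[OF B h(1) h(2) True] by simp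
    next
      case False
      hence "q' = Suc ?n" using h by simp
      moreover have "w q \<in> {1..?n}" using Mp_in[OF Mw] h False by simp
      ultimately show ?thesis using wn by simp
    qed
  qed
  have m2: "isMin ?g (min_perm ?g)" by (rule isMin_min_perm)
  have "w = min_perm ?g" using BI_unique[OF M' _ B' min_BI[OF m2]] m2 isMin_def by blast
  thus ?thesis unfolding w_def by simp
qed

lemma atom_snoc0: "atom (g @ [0]) = atom g"
  unfolding atom_def by (simp add: min_perm_snoc0 sort_dec_snoc0 xmon_snoc0)

lemma atom_pad: "atom (g @ replicate k 0) = atom g"
proof (induct k)
  case 0 then show ?case by simp
next
  case (Suc k)
  have "g @ replicate (Suc k) 0 = (g @ replicate k 0) @ [0]" by (simp add: replicate_append_same)
  thus ?case using Suc atom_snoc0 by metis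
qed

lemma ap_zero: "atom_positive 0"
  unfolding atom_positive_def by (rule exI[of _ "{}"]) simp

lemma ap_atom: "atom_positive (atom g)"
  unfolding atom_positive_def by (rule exI[of _ "{g}"], rule exI[of _ "\<lambda>_. 1"]) simp

lemma ap_add: assumes "atom_positive f" "atom_positive h" shows "atom_positive (f + h)"
proof -
  obtain S c where S: "finite S" "f = (\<Sum>x\<in>S. of_nat (c x) * atom x)" using assms(1) atom_positive_def by blast
  obtain T d where T: "finite T" "h = (\<Sum>x\<in>T. of_nat (d x) * atom x)" using assms(2) atom_positive_def by blast
  define e where "e x = (if x \<in> S then c x else 0) + (if x \<in> T then d x else 0)" for x
  have fin: "finite (S \<union> T)" using S T by simp
  have 1: "(\<Sum>x\<in>S \<union> T. (if x \<in> S then of_nat (c x) * atom x else 0)) = f"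
  proof -
    have "(\<Sum>x\<in>S \<union> T. (if x \<in> S then of_nat (c x) * atom x else 0)) = (\<Sum>x\<in>(S \<union> T) \<inter> S. of_nat (c x) * atom x)"
      by (rule sum.inter_restrict[OF fin, symmetric])
    also have "(S \<union> T) \<inter> S = S" by blast
    finally show ?thesis using S(2) by simp
  qed
  have 2: "(\<Sum>x\<in>S \<union> T. (if x \<in> T then of_nat (d x) * atom x else 0)) = h"
  proof -
    have "(\<Sum>x\<in>S \<union> T. (if x \<in> T then of_nat (d x) * atom x else 0)) = (\<Sum>x\<in>(S \<union> T) \<inter> T. of_nat (d x) * atom x)"
      by (rule sum.inter_restrict[OF fin, symmetric])
    also have "(S \<union> T) \<inter> T = T" by blast
    finally show ?thesis using T(2) by simp
  qed
  have 3: "of_nat (e x) * atom x = (if x \<in> S then of_nat (c x) * atom x else 0) + (if x \<in> T then of_nat (d x) * atom x else 0)" for x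
    by (simp add: e_def distrib_right)
  have "f + h = (\<Sum>x\<in>S \<union> T. of_nat (e x) * atom x)"
    unfolding 3 sum.distrib 1 2 ..
  thus ?thesis unfolding atom_positive_def using fin by blast
qed

lemma ap_smult: assumes "atom_positive f" shows "atom_positive (of_nat k * f)"
proof -
  obtain S c where S: "finite S" "f = (\<Sum>x\<in>S. of_nat (c x) * atom x)" using assms atom_positive_def by blast
  have "of_nat k * f = (\<Sum>x\<in>S. of_nat k * (of_nat (c x) * atom x))"
    unfolding S(2) by (rule sum_distrib_left)
  also have "\<dots> = (\<Sum>x\<in>S. of_nat (k * c x) * atom x)"
    by (rule sum.cong) (simp_all only: of_nat_mult mult.assoc)
  finally have "of_nat k * f = (\<Sum>x\<in>S. of_nat (k * c x) * atom x)" .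
  thus ?thesis unfolding atom_positive_def using S(1) by (intro exI[of _ S] exI[of _ "\<lambda>x. k * c x"]) simp
qed

lemma ap_sum: "finite S \<Longrightarrow> (\<And>x. x \<in> S \<Longrightarrow> atom_positive (F x)) \<Longrightarrow> atom_positive (sum F S)"
proof (induct S rule: finite_induct)
  case empty then show ?case using ap_zero by simp
next
  case (insert x S)
  have "atom_positive (F x + sum F S)" by (rule ap_add) (use insert in auto)
  thus ?case using insert(1,2) by simp
qed

lemma atom_pi_pos:
  assumes i: "1 \<le> i"
  shows "atom_positive (piop i (atom g))"
proof -
  define gp where "gp = g @ replicate (Suc i) 0"
  have ag: "atom gp = atom g" unfolding gp_def by (rule atom_pad)
  have len: "Suc i \<le> length gp" unfolding gp_def by simp
  consider "gp ! i < gp ! (i - 1)" | "gp ! (i - 1) = gp ! i" | "gp ! (i - 1) < gp ! i" by linarith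
  hence "atom_positive (piop i (atom gp))"
  proof cases
    case 1
    have "piop i (atom gp) = atom gp + atom (swp i gp)"
      by (simp add: piop_theta atom_swap_gt[OF i len 1])
    thus ?thesis using ap_add ap_atom by simp
  next
    case 2
    have "piop i (atom gp) = atom gp"
      by (simp add: piop_theta atom_eq_theta0[OF i len 2])
    thus ?thesis using ap_atom by simp
  next
    case 3
    let ?g' = "swp i gp"
    have len': "Suc i \<le> length ?g'" using len by simp
    have lt': "?g' ! i < ?g' ! (i - 1)" using 3 i len by (simp add: swp_def nth_list_update)
    have "atom gp = thetaop i (atom ?g')" using atom_swap_gt[OF i len' lt'] swp_swp[OF i len] by simp
    hence "piop i (atom gp) = 0" by (simp add: piop_theta theta_theta)
    thus ?thesis using ap_zero by simp
  qed
  thus ?thesis using ag by simp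
qed

theorem lemma4p16:
  fixes f :: zpoly and i :: nat
  assumes "atom_positive f" and "1 \<le> i"
  shows "atom_positive (piop i f)"
proof -
  obtain S c where S: "finite S" "f = (\<Sum>x\<in>S. of_nat (c x) * atom x)" using assms(1) atom_positive_def by blast
  have "piop i f = (\<Sum>x\<in>S. of_nat (c x) * piop i (atom x))"
    unfolding S(2) by (simp add: piop_sum piop_of_nat_mult)
  thus ?thesis using ap_sum[OF S(1)] ap_smult atom_pi_pos[OF assms(2)] by simp
qed

end
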